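(* Let $1<\alpha<2$ and $0<r<1$. Let $p,q$ be real numbers for which $k(x):=x^{p}(1-x)^{q}$ is integrable on $(0,1)$, and let $K(x):=\int_0^x k(s)\,ds$. If (i) $3-\alpha+p+q=1$, and (ii) $r\sin(\pi(-q))=(1-r)\sin(\pi(-p))$, then $K$ belongs to the kernel of $\mathcal{L}_r^{\alpha}$, i.e. $\mathcal{L}_r^{\alpha}K=0$ on $(0,1)$.
   Context: Let $D=d/dx$. For $\sigma>0$ and $u$ on $(0,1)$: $\mathbf{D}^{-\sigma}u(x)=\frac{1}{\Gamma(\sigma)}\int_0^x (x-s)^{\sigma-1}u(s)\,ds$ and $\mathbf{D}^{-\sigma*}u(x)=\frac{1}{\Gamma(\sigma)}\int_x^1 (s-x)^{\sigma-1}u(s)\,ds$. For $1<\alpha<2$, $\mathbf{D}^{\alpha}u:=D\,\mathbf{D}^{-(2-\alpha)}\,Du$, $\mathbf{D}^{\alpha*}u:=D\,\mathbf{D}^{-(2-\alpha)*}\,Du$, and $\mathcal{L}_r^{\alpha}u:=-\big(r\,\mathbf{D}^{\alpha}u+(1-r)\,\mathbf{D}^{\alpha*}u\big)$ (note: this is not the Riemann–Liouville nor the Caputo fractional derivative). *)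

theory Defs
  imports "HOL-Analysis.Analysis"
begin

definition frac_int :: "real \<Rightarrow> (real \<Rightarrow> real) \<Rightarrow> real \<Rightarrow> real" where
  "frac_int \<sigma> u x = (1 / Gamma \<sigma>) * integral {0..x} (\<lambda>s. (x - s) powr (\<sigma> - 1) * u s)"

definition frac_int_star :: "real \<Rightarrow> (real \<Rightarrow> real) \<Rightarrow> real \<Rightarrow> real" where
  "frac_int_star \<sigma> u x = (1 / Gamma \<sigma>) * integral {x..1} (\<lambda>s. (s - x) powr (\<sigma> - 1) * u s)"

definition frac_D :: "real \<Rightarrow> (real \<Rightarrow> real) \<Rightarrow> real \<Rightarrow> real" where
  "frac_D \<alpha> u x = deriv (frac_int (2 - \<alpha>) (deriv u)) x"

definition frac_D_star :: "real \<Rightarrow> (real \<Rightarrow> real) \<Rightarrow> real \<Rightarrow> real" where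
  "frac_D_star \<alpha> u x = deriv (frac_int_star (2 - \<alpha>) (deriv u)) x"

definition frac_L :: "real \<Rightarrow> real \<Rightarrow> (real \<Rightarrow> real) \<Rightarrow> real \<Rightarrow> real" where
  "frac_L r \<alpha> u x = - (r * frac_D \<alpha> u x + (1 - r) * frac_D_star \<alpha> u x)"

end

theory Submission
  imports Defs "HOL-Complex_Analysis.Complex_Analysis"
begin

lemma pow_abs_integrable:
  fixes a L U \<beta> :: real assumes b: "-1 < \<beta>"
  shows "(\<lambda>t. \<bar>t - a\<bar> powr \<beta>) integrable_on {L..U}"
proof (cases "L \<le> U")
  case False then show ?thesis by (simp add: integrable_on_empty)  
next
  case True
  define F where "F t = sgn (t - a) * \<bar>t - a\<bar> powr (\<beta>+1) / (\<beta>+1)" for t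
  have der: "(F has_vector_derivative \<bar>t - a\<bar> powr \<beta>) (at t)" if "t \<noteq> a" for t
  proof (cases "t > a")
    case True
    have "((\<lambda>t. (t - a) powr (\<beta>+1) / (\<beta>+1)) has_real_derivative \<bar>t - a\<bar> powr \<beta>) (at t)"
      using True b by (auto intro!: derivative_eq_intros)
    then have "(F has_real_derivative \<bar>t - a\<bar> powr \<beta>) (at t)"
      by (rule has_field_derivative_transform_within_open[where S="{a<..}"]) (use True in \<open>auto simp: F_def\<close>)
    then show ?thesis by (simp add: has_real_derivative_iff_has_vector_derivative)
  next
    case False
    then have ta: "t < a" using that by auto
    have "((\<lambda>t. - ((a - t) powr (\<beta>+1) / (\<beta>+1))) has_real_derivative \<bar>t - a\<bar> powr \<beta>) (at t)"
      using ta b by (auto intro!: derivative_eq_intros)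
    then have "(F has_real_derivative \<bar>t - a\<bar> powr \<beta>) (at t)"
      by (rule has_field_derivative_transform_within_open[where S="{..<a}"]) (use ta in \<open>auto simp: F_def abs_if\<close>)
    then show ?thesis by (simp add: has_real_derivative_iff_has_vector_derivative)
  qed
  have cont: "continuous_on {L..U} F"
  proof -
    have "isCont F t" for t
    proof (cases "t = a")
      case True
      have "((\<lambda>t. \<bar>t - a\<bar> powr (\<beta>+1)) \<longlongrightarrow> 0) (at a)"
      proof -
        have "((\<lambda>t. \<bar>t - a\<bar> powr (\<beta>+1)) \<longlongrightarrow> \<bar>a - a\<bar> powr (\<beta>+1)) (at a)"
          using b by (intro tendsto_intros) auto
        then show ?thesis by simp
      qed
      then have "((\<lambda>t. sgn (t - a) * \<bar>t - a\<bar> powr (\<beta>+1) / (\<beta>+1)) \<longlongrightarrow> 0) (at a)"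
      proof -
        have "(\<lambda>t. \<bar>sgn (t - a) * \<bar>t - a\<bar> powr (\<beta>+1) / (\<beta>+1)\<bar>) = (\<lambda>t. \<bar>t - a\<bar> powr (\<beta>+1) / (\<beta>+1))"
          using b by (auto simp: abs_mult sgn_if)
        moreover have "((\<lambda>t. \<bar>t - a\<bar> powr (\<beta>+1) / (\<beta>+1)) \<longlongrightarrow> 0) (at a)"
          using \<open>((\<lambda>t. \<bar>t - a\<bar> powr (\<beta>+1)) \<longlongrightarrow> 0) (at a)\<close> using tendsto_divide_zero by blast
        ultimately show ?thesis
          by (subst tendsto_rabs_zero_iff[symmetric]) simp
      qed
      then show ?thesis using True by (simp add: isCont_def F_def[abs_def])
    next
      case False
      then show ?thesis using der[OF False]
        by (meson has_vector_derivative_continuous)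
    qed
    then show ?thesis by (simp add: continuous_at_imp_continuous_on)
  qed
  have "((\<lambda>t. \<bar>t - a\<bar> powr \<beta>) has_integral (F U - F L)) {L..U}"
    by (rule fundamental_theorem_of_calculus_interior_strong[where S="{a}"])
       (use True der cont in auto)
  then show ?thesis by blast
qed


lemma borel_lebesgue_on: "f \<in> borel_measurable borel \<Longrightarrow> f \<in> borel_measurable (lebesgue_on S)"
  by (rule measurable_restrict_space1, rule measurable_completion) simp

lemma powr_far_le:
  fixes y d e :: real assumes "0 < d" "d \<le> y" "e \<le> 0"
  shows "y powr e \<le> d powr e"
  using assms by (simp add: powr_mono2')

lemma ge1_mult: fixes u v w :: real assumes "0 \<le> u" "0 \<le> v" "1 \<le> w" shows "u * v \<le> u * (w * v)"
proof -
  have "v \<le> w * v" using assms by (simp add: mult_le_cancel_right1)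
  then show ?thesis using assms by (simp add: mult_left_mono)
qed

lemma three_pt_bound:
  fixes a b c \<beta> \<gamma> \<zeta> t d :: real
  assumes "\<beta> \<le> 0" "\<gamma> \<le> 0" "\<zeta> \<le> 0"
    and d0: "0 < d" "d \<le> 1" "2*d \<le> b - a" "2*d \<le> c - b"
  shows "\<bar>t-a\<bar> powr \<beta> * \<bar>t-b\<bar> powr \<gamma> * \<bar>t-c\<bar> powr \<zeta>
     \<le> d powr (\<beta>+\<gamma>+\<zeta>) * (\<bar>t-a\<bar> powr \<beta> + \<bar>t-b\<bar> powr \<gamma> + \<bar>t-c\<bar> powr \<zeta> + 1)"
proof -
  have d1: "1 \<le> d powr e" if "e \<le> 0" for e
    using powr_mono2'[of e d 1] d0 that by simp
  have nn: "0 \<le> \<bar>t-a\<bar> powr \<beta>" "0 \<le> \<bar>t-b\<bar> powr \<gamma>" "0 \<le> \<bar>t-c\<bar> powr \<zeta>" by auto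
  have split: "d powr (\<beta>+\<gamma>+\<zeta>) = d powr \<beta> * d powr \<gamma> * d powr \<zeta>" by (simp add: powr_add)
  have pd: "0 < d powr \<beta>" "0 < d powr \<gamma>" "0 < d powr \<zeta>" using d0 by auto
  have fin: "d powr \<beta> * d powr \<gamma> * d powr \<zeta> * X \<le> d powr (\<beta>+\<gamma>+\<zeta>) * (\<bar>t-a\<bar> powr \<beta> + \<bar>t-b\<bar> powr \<gamma> + \<bar>t-c\<bar> powr \<zeta> + 1)"
    if "X \<le> \<bar>t-a\<bar> powr \<beta> + \<bar>t-b\<bar> powr \<gamma> + \<bar>t-c\<bar> powr \<zeta> + 1" for X
    unfolding split using that pd by (intro mult_left_mono) auto
  show ?thesis
  proof (cases "\<bar>t - a\<bar> < d")
    case True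
    then have "d \<le> \<bar>t-b\<bar>" "d \<le> \<bar>t-c\<bar>" using d0 by auto
    then have h: "\<bar>t-b\<bar> powr \<gamma> \<le> d powr \<gamma>" "\<bar>t-c\<bar> powr \<zeta> \<le> d powr \<zeta>"
      using powr_far_le d0 assms by auto
    have "\<bar>t-a\<bar> powr \<beta> * \<bar>t-b\<bar> powr \<gamma> * \<bar>t-c\<bar> powr \<zeta> \<le> \<bar>t-a\<bar> powr \<beta> * (d powr \<gamma> * d powr \<zeta>)"
      using h nn unfolding mult.assoc by (intro mult_left_mono mult_mono) auto
    also have "\<dots> \<le> \<bar>t-a\<bar> powr \<beta> * (d powr \<beta> * (d powr \<gamma> * d powr \<zeta>))"
      using d1[of \<beta>] assms nn pd by (intro ge1_mult) auto
    also have "\<dots> = d powr \<beta> * d powr \<gamma> * d powr \<zeta> * \<bar>t-a\<bar> powr \<beta>" by (simp add: ac_simps)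
    also have "\<dots> \<le> d powr (\<beta>+\<gamma>+\<zeta>) * (\<bar>t-a\<bar> powr \<beta> + \<bar>t-b\<bar> powr \<gamma> + \<bar>t-c\<bar> powr \<zeta> + 1)"
      using nn by (intro fin) auto
    finally show ?thesis .
  next
    case Fa: False
    show ?thesis
    proof (cases "\<bar>t - b\<bar> < d")
      case True
      then have "d \<le> \<bar>t-c\<bar>" using d0 by auto
      then have h: "\<bar>t-a\<bar> powr \<beta> \<le> d powr \<beta>" "\<bar>t-c\<bar> powr \<zeta> \<le> d powr \<zeta>"
        using powr_far_le d0 assms Fa by auto
      have "\<bar>t-a\<bar> powr \<beta> * \<bar>t-b\<bar> powr \<gamma> * \<bar>t-c\<bar> powr \<zeta> = \<bar>t-b\<bar> powr \<gamma> * (\<bar>t-a\<bar> powr \<beta> * \<bar>t-c\<bar> powr \<zeta>)"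
        by (simp add: ac_simps)
      also have "\<dots> \<le> \<bar>t-b\<bar> powr \<gamma> * (d powr \<beta> * d powr \<zeta>)"
        using h nn by (intro mult_left_mono mult_mono) auto
      also have "\<dots> \<le> \<bar>t-b\<bar> powr \<gamma> * (d powr \<gamma> * (d powr \<beta> * d powr \<zeta>))"
        using d1[of \<gamma>] assms nn pd by (intro ge1_mult) auto
      also have "\<dots> = d powr \<beta> * d powr \<gamma> * d powr \<zeta> * \<bar>t-b\<bar> powr \<gamma>" by (simp add: ac_simps)
      also have "\<dots> \<le> d powr (\<beta>+\<gamma>+\<zeta>) * (\<bar>t-a\<bar> powr \<beta> + \<bar>t-b\<bar> powr \<gamma> + \<bar>t-c\<bar> powr \<zeta> + 1)"
        using nn by (intro fin) auto
      finally show ?thesis .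
    next
      case Fb: False
      show ?thesis
      proof (cases "\<bar>t - c\<bar> < d")
        case True
        have h: "\<bar>t-a\<bar> powr \<beta> \<le> d powr \<beta>" "\<bar>t-b\<bar> powr \<gamma> \<le> d powr \<gamma>"
          using powr_far_le d0 assms Fa Fb by auto
        have "\<bar>t-a\<bar> powr \<beta> * \<bar>t-b\<bar> powr \<gamma> * \<bar>t-c\<bar> powr \<zeta> = \<bar>t-c\<bar> powr \<zeta> * (\<bar>t-a\<bar> powr \<beta> * \<bar>t-b\<bar> powr \<gamma>)"
          by (simp add: ac_simps)
        also have "\<dots> \<le> \<bar>t-c\<bar> powr \<zeta> * (d powr \<beta> * d powr \<gamma>)"
          using h nn by (intro mult_left_mono mult_mono) auto
        also have "\<dots> \<le> \<bar>t-c\<bar> powr \<zeta> * (d powr \<zeta> * (d powr \<beta> * d powr \<gamma>))"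
          using d1[of \<zeta>] assms nn pd by (intro ge1_mult) auto
        also have "\<dots> = d powr \<beta> * d powr \<gamma> * d powr \<zeta> * \<bar>t-c\<bar> powr \<zeta>" by (simp add: ac_simps)
        also have "\<dots> \<le> d powr (\<beta>+\<gamma>+\<zeta>) * (\<bar>t-a\<bar> powr \<beta> + \<bar>t-b\<bar> powr \<gamma> + \<bar>t-c\<bar> powr \<zeta> + 1)"
          using nn by (intro fin) auto
        finally show ?thesis .
      next
        case Fc: False
        have h: "\<bar>t-a\<bar> powr \<beta> \<le> d powr \<beta>" "\<bar>t-b\<bar> powr \<gamma> \<le> d powr \<gamma>" "\<bar>t-c\<bar> powr \<zeta> \<le> d powr \<zeta>"
          using powr_far_le d0 assms Fa Fb Fc by auto
        have "\<bar>t-a\<bar> powr \<beta> * \<bar>t-b\<bar> powr \<gamma> * \<bar>t-c\<bar> powr \<zeta> \<le> d powr \<beta> * d powr \<gamma> * d powr \<zeta>"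
          using h nn pd by (intro mult_mono) auto
        also have "\<dots> = d powr \<beta> * d powr \<gamma> * d powr \<zeta> * 1" by simp
        also have "\<dots> \<le> d powr (\<beta>+\<gamma>+\<zeta>) * (\<bar>t-a\<bar> powr \<beta> + \<bar>t-b\<bar> powr \<gamma> + \<bar>t-c\<bar> powr \<zeta> + 1)"
          using nn by (intro fin) auto
        finally show ?thesis .
      qed
    qed
  qed
qed

lemma three_pt_integrable:
  fixes a b c \<beta> \<gamma> \<zeta> L U :: real
  assumes "a < b" "b < c" "-1 < \<beta>" "\<beta> \<le> 0" "-1 < \<gamma>" "\<gamma> \<le> 0" "-1 < \<zeta>" "\<zeta> \<le> 0"
  shows "(\<lambda>t. \<bar>t-a\<bar> powr \<beta> * \<bar>t-b\<bar> powr \<gamma> * \<bar>t-c\<bar> powr \<zeta>) integrable_on {L..U}"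
proof -
  define d where "d = min 1 (min (b - a) (c - b) / 2)"
  have dm: "d \<le> min (b - a) (c - b) / 2" "d \<le> 1" "0 < d" 
    unfolding d_def by (rule min.cobounded2, rule min.cobounded1, use assms in simp)
  have m1: "min (b - a) (c - b) \<le> b - a" and m2: "min (b - a) (c - b) \<le> c - b" by auto
  have "2*d \<le> min (b - a) (c - b)" using dm(1) by simp
  then have d0: "0 < d" "d \<le> 1" "2*d \<le> b - a" "2*d \<le> c - b" using dm(2,3) m1 m2 by (auto intro: order_trans)
  show ?thesis
  proof (rule measurable_bounded_by_integrable_imp_integrable_real)
    show "(\<lambda>t. \<bar>t-a\<bar> powr \<beta> * \<bar>t-b\<bar> powr \<gamma> * \<bar>t-c\<bar> powr \<zeta>) \<in> borel_measurable (lebesgue_on {L..U})"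
      by (rule borel_lebesgue_on) measurable
    show "(\<lambda>t. d powr (\<beta>+\<gamma>+\<zeta>) * (\<bar>t-a\<bar> powr \<beta> + \<bar>t-b\<bar> powr \<gamma> + \<bar>t-c\<bar> powr \<zeta> + 1)) integrable_on {L..U}"
    proof -
      have "(\<lambda>t. \<bar>t-a\<bar> powr \<beta> + \<bar>t-b\<bar> powr \<gamma> + \<bar>t-c\<bar> powr \<zeta> + 1) integrable_on {L..U}"
        using assms by (intro integrable_add pow_abs_integrable integrable_const_ivl) auto
      from integrable_cmul[OF this, of "d powr (\<beta>+\<gamma>+\<zeta>)"] show ?thesis by simp
    qed
    show "\<bar>\<bar>t-a\<bar> powr \<beta> * \<bar>t-b\<bar> powr \<gamma> * \<bar>t-c\<bar> powr \<zeta>\<bar> \<le> d powr (\<beta>+\<gamma>+\<zeta>) * (\<bar>t-a\<bar> powr \<beta> + \<bar>t-b\<bar> powr \<gamma> + \<bar>t-c\<bar> powr \<zeta> + 1)" for t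
      using three_pt_bound[OF assms(4,6,8) d0] by simp
  qed auto
qed

lemma weighted_integrable:
  fixes h g :: "real \<Rightarrow> real"
  assumes hi: "h integrable_on {a..b}" and hnn: "\<And>t. t \<in> {a..b} \<Longrightarrow> 0 \<le> h t"
    and gc: "continuous_on {a..b} g"
  shows "(\<lambda>t. h t * g t) integrable_on {a..b}"
proof -
  have "(\<lambda>t. g t * h t) absolutely_integrable_on {a..b}"
  proof (rule absolutely_integrable_bounded_measurable_product_real)
    show "g \<in> borel_measurable (lebesgue_on {a..b})"
      by (rule continuous_imp_measurable_on_sets_lebesgue[OF gc]) simp
    show "bounded (g ` {a..b})" by (rule compact_imp_bounded, rule compact_continuous_image[OF gc]) simp
    show "h absolutely_integrable_on {a..b}" by (rule nonnegative_absolutely_integrable_1[OF hi hnn])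
  qed simp
  then have "(\<lambda>t. g t * h t) integrable_on {a..b}" by (simp add: absolutely_integrable_on_def)
  then show ?thesis by (simp add: mult.commute)
qed

lemma mvt_between:
  fixes f f' :: "real \<Rightarrow> real"
  assumes der: "\<And>z. min x y \<le> z \<Longrightarrow> z \<le> max x y \<Longrightarrow> (f has_real_derivative f' z) (at z)"
  shows "\<exists>z. \<bar>z - x\<bar> \<le> \<bar>y - x\<bar> \<and> f y - f x = (y - x) * f' z"
proof (cases "x < y")
  case True
  obtain z where "x < z" "z < y" "f y - f x = (y - x) * f' z"
    using MVT2[OF True, of f f'] der True by auto
  then show ?thesis by (intro exI[of _ z]) auto
next
  case False
  show ?thesis
  proof (cases "y < x")
    case True
    obtain z where "y < z" "z < x" "f x - f y = (x - y) * f' z"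
      using MVT2[OF True, of f f'] der True by auto
    then have "f y - f x = (y - x) * f' z" by (simp add: algebra_simps)
    then show ?thesis using \<open>y < z\<close> \<open>z < x\<close> by (intro exI[of _ z]) auto
  next
    case False
    then have "y = x" using \<open>\<not> x < y\<close> by simp
    then show ?thesis by (intro exI[of _ x]) simp
  qed
qed

lemma param_deriv:
  fixes h :: "real \<Rightarrow> real" and \<phi> \<phi>' :: "real \<Rightarrow> real \<Rightarrow> real"
  assumes hi: "h integrable_on {0..1}" and hnn: "\<And>t. t \<in> {0..1} \<Longrightarrow> 0 \<le> h t"
    and U: "open U" "x \<in> U"
    and der: "\<And>y t. y \<in> U \<Longrightarrow> t \<in> {0..1} \<Longrightarrow> ((\<lambda>y. \<phi> y t) has_real_derivative \<phi>' y t) (at y)"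
    and cont: "continuous_on (U \<times> {0..1}) (\<lambda>(y,t). \<phi>' y t)"
    and c\<phi>: "\<And>y. y \<in> U \<Longrightarrow> continuous_on {0..1} (\<phi> y)"
  shows "((\<lambda>y. integral {0..1} (\<lambda>t. h t * \<phi> y t)) has_real_derivative integral {0..1} (\<lambda>t. h t * \<phi>' x t)) (at x)"
proof -
  obtain \<delta> where \<delta>: "\<delta> > 0" "cball x \<delta> \<subseteq> U" using U open_contains_cball by blast
  have c\<phi>': "continuous_on {0..1} (\<phi>' y)" if "y \<in> U" for y
  proof -
    have "continuous_on {0..1} (\<lambda>t. (\<lambda>(y,t). \<phi>' y t) (y, t))"
      by (rule continuous_on_compose2[OF cont]) (use that in \<open>auto intro!: continuous_intros\<close>)
    then show ?thesis by simp
  qed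
  have int\<phi>: "(\<lambda>t. h t * \<phi> y t) integrable_on {0..1}" if "y \<in> U" for y
    by (rule weighted_integrable[OF hi hnn c\<phi>[OF that]])
  have int\<phi>': "(\<lambda>t. h t * \<phi>' y t) integrable_on {0..1}" if "y \<in> U" for y
    by (rule weighted_integrable[OF hi hnn c\<phi>'[OF that]])
  define K where "K = cball x \<delta> \<times> {0..1::real}"
  have Kc: "compact K" unfolding K_def by (intro compact_Times compact_cball) simp
  have KU: "K \<subseteq> U \<times> {0..1}" using \<delta> by (auto simp: K_def)
  have uc: "uniformly_continuous_on K (\<lambda>(y,t). \<phi>' y t)"
    by (rule compact_uniformly_continuous[OF continuous_on_subset[OF cont KU] Kc])
  define M where "M = integral {0..1} h + 1"
  have Mpos: "M > 0"
  proof -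
    have "0 \<le> integral {0..1} h" using hi hnn by (intro integral_nonneg) auto
    then show ?thesis by (simp add: M_def)
  qed
  show ?thesis
    unfolding has_field_derivative_iff
  proof (rule tendstoI)
    fix \<epsilon> :: real assume \<epsilon>: "\<epsilon> > 0"
    define F where "F = (\<lambda>(y,t). \<phi>' y t)"
    have "\<exists>d1>0. \<forall>u\<in>K. \<forall>v\<in>K. dist v u < d1 \<longrightarrow> dist (F v) (F u) < \<epsilon> / (2 * M)"
      using uc[unfolded uniformly_continuous_on_def F_def[symmetric], rule_format, of "\<epsilon> / (2*M)"] \<epsilon> Mpos by auto
    then obtain d1 where d1: "d1 > 0" "\<forall>u\<in>K. \<forall>v\<in>K. dist v u < d1 \<longrightarrow> dist (F v) (F u) < \<epsilon> / (2 * M)"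
      by blast
    define d where "d = min \<delta> d1"
    have "d > 0" using \<delta> d1 by (simp add: d_def)
    have "dist ((integral {0..1} (\<lambda>t. h t * \<phi> y t) - integral {0..1} (\<lambda>t. h t * \<phi> x t)) / (y - x))
            (integral {0..1} (\<lambda>t. h t * \<phi>' x t)) < \<epsilon>"
      if y: "y \<noteq> x" "dist y x < d" for y
    proof -
      have yU: "y \<in> U" using y \<delta> by (auto simp: d_def dist_commute intro!: subsetD[OF \<delta>(2)])
      have xU: "x \<in> U" by (rule U)
      have pt: "\<bar>(\<phi> y t - \<phi> x t) / (y - x) - \<phi>' x t\<bar> \<le> \<epsilon> / (2 * M)" if t: "t \<in> {0..1}" for t
      proof -
        obtain z where z: "\<bar>z - x\<bar> \<le> \<bar>y - x\<bar>" "\<phi> y t - \<phi> x t = (y - x) * \<phi>' z t"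
        proof -
          have "\<exists>z. \<bar>z - x\<bar> \<le> \<bar>y - x\<bar> \<and> (\<lambda>y. \<phi> y t) y - (\<lambda>y. \<phi> y t) x = (y - x) * \<phi>' z t"
          proof (rule mvt_between)
            fix z assume "min x y \<le> z" "z \<le> max x y"
            then have "dist x z \<le> \<delta>" using y by (auto simp: d_def dist_real_def)
            then have "z \<in> U" using \<delta> by auto
            then show "((\<lambda>y. \<phi> y t) has_real_derivative \<phi>' z t) (at z)" using der t by blast
          qed
          then show ?thesis using that by auto
        qed
        have zK: "(z, t) \<in> K" "(x, t) \<in> K" using z y t by (auto simp: K_def d_def dist_real_def)
        have "dist (z, t) (x, t) < d1" using z y by (simp add: dist_Pair_Pair dist_real_def d_def)
        then have "\<bar>\<phi>' z t - \<phi>' x t\<bar> < \<epsilon> / (2 * M)" using d1(2) zK by (auto simp: dist_real_def F_def)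
        moreover have "(\<phi> y t - \<phi> x t) / (y - x) = \<phi>' z t" using z y by (simp add: field_simps)
        ultimately show ?thesis by simp
      qed
      have "(integral {0..1} (\<lambda>t. h t * \<phi> y t) - integral {0..1} (\<lambda>t. h t * \<phi> x t)) / (y - x)
             - integral {0..1} (\<lambda>t. h t * \<phi>' x t)
           = integral {0..1} (\<lambda>t. h t * ((\<phi> y t - \<phi> x t) / (y - x) - \<phi>' x t))"
      proof -
        have "integral {0..1} (\<lambda>t. h t * ((\<phi> y t - \<phi> x t) / (y - x) - \<phi>' x t))
            = integral {0..1} (\<lambda>t. (h t * \<phi> y t - h t * \<phi> x t) / (y - x) - h t * \<phi>' x t)"
          by (simp add: algebra_simps diff_divide_distrib)
        also have "\<dots> = integral {0..1} (\<lambda>t. (h t * \<phi> y t - h t * \<phi> x t) / (y - x)) - integral {0..1} (\<lambda>t. h t * \<phi>' x t)"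
          by (rule Henstock_Kurzweil_Integration.integral_diff)
             (auto intro!: integrable_on_divide integrable_diff int\<phi> int\<phi>' yU xU)
        also have "integral {0..1} (\<lambda>t. (h t * \<phi> y t - h t * \<phi> x t) / (y - x))
            = (integral {0..1} (\<lambda>t. h t * \<phi> y t) - integral {0..1} (\<lambda>t. h t * \<phi> x t)) / (y - x)"
          using Henstock_Kurzweil_Integration.integral_diff[OF int\<phi>[OF yU] int\<phi>[OF xU]] by simp
        finally show ?thesis by simp
      qed
      moreover have "\<bar>integral {0..1} (\<lambda>t. h t * ((\<phi> y t - \<phi> x t) / (y - x) - \<phi>' x t))\<bar>
           \<le> integral {0..1} (\<lambda>t. h t * (\<epsilon> / (2 * M)))"
      proof -
        have "norm (integral {0..1} (\<lambda>t. h t * ((\<phi> y t - \<phi> x t) / (y - x) - \<phi>' x t)))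
           \<le> integral {0..1} (\<lambda>t. h t * (\<epsilon> / (2 * M)))"
        proof (rule Henstock_Kurzweil_Integration.integral_norm_bound_integral)
          show "(\<lambda>t. h t * ((\<phi> y t - \<phi> x t) / (y - x) - \<phi>' x t)) integrable_on {0..1}"
            by (rule weighted_integrable[OF hi hnn])
               (use c\<phi>[OF yU] c\<phi>[OF xU] c\<phi>'[OF xU] y(1) in \<open>auto intro!: continuous_intros\<close>)
          show "(\<lambda>t. h t * (\<epsilon> / (2 * M))) integrable_on {0..1}"
            using integrable_on_cmult_right[OF hi, of "\<epsilon> / (2 * M)"] by (simp only: of_real_eq_id id_def)
          show "norm (h t * ((\<phi> y t - \<phi> x t) / (y - x) - \<phi>' x t)) \<le> h t * (\<epsilon> / (2 * M))" if "t \<in> {0..1}" for t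
            using mult_left_mono[OF pt[OF that] hnn[OF that]] hnn[OF that] by (simp add: abs_mult)
        qed
        then show ?thesis by simp
      qed
      moreover have "integral {0..1} (\<lambda>t. h t * (\<epsilon> / (2 * M))) < \<epsilon>"
      proof -
        have "integral {0..1} (\<lambda>t. h t * (\<epsilon> / (2 * M))) = integral {0..1} h * (\<epsilon> / (2 * M))" by simp
        also have "\<dots> < M * (\<epsilon> / (2 * M))" using \<epsilon> Mpos by (intro mult_strict_right_mono) (auto simp: M_def)
        also have "\<dots> < \<epsilon>" using \<epsilon> Mpos by simp
        finally show ?thesis .
      qed
      ultimately show ?thesis by (simp add: dist_real_def)
    qed
    then show "\<forall>\<^sub>F y in at x. dist ((integral {0..1} (\<lambda>t. h t * \<phi> y t) - integral {0..1} (\<lambda>t. h t * \<phi> x t)) / (y - x))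
            (integral {0..1} (\<lambda>t. h t * \<phi>' x t)) < \<epsilon>"
      using \<open>d > 0\<close> by (auto simp: eventually_at)
  qed
qed

lemma A_integrable:
  fixes \<mu> p q y :: real
  assumes "0 < \<mu>" "\<mu> < 1" "-1 < p" "p < 0" "-1 < q" "q < 0" "0 < y" "y < 1"
  shows "(\<lambda>s. (y - s) powr (-\<mu>) * (s powr p * (1 - s) powr q)) integrable_on {0..y}"
proof -
  have "(\<lambda>t. \<bar>t-0\<bar> powr p * \<bar>t-y\<bar> powr (-\<mu>) * \<bar>t-1\<bar> powr q) integrable_on {0..y}"
    using assms by (intro three_pt_integrable) auto
  then show ?thesis
    by (rule integrable_eq) (use assms in \<open>auto simp: abs_if\<close>)
qed

lemma A_scaled:
  fixes \<mu> p q y :: real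
  assumes prm: "0 < \<mu>" "\<mu> < 1" "-1 < p" "p < 0" "-1 < q" "q < 0" and y: "0 < y" "y < 1"
  shows "integral {0..y} (\<lambda>s. (y - s) powr (-\<mu>) * (s powr p * (1 - s) powr q))
       = y powr (1 + p - \<mu>) * integral {0..1} (\<lambda>t. ((1 - t) powr (-\<mu>) * t powr p) * (1 - y * t) powr q)"
proof -
  define f where "f s = (y - s) powr (-\<mu>) * (s powr p * (1 - s) powr q)" for s
  define I where "I = integral {0..y} f"
  have fi: "(f has_integral I) {0..y}" unfolding I_def f_def
    using A_integrable[OF prm y] by (simp add: integrable_integral)
  from has_integral_stretch_real[OF fi, of y] y
  have "((\<lambda>t. f (y * t)) has_integral I / y) {0..1}" by simp
  moreover have "f (y * t) = y powr (p - \<mu>) * (((1 - t) powr (-\<mu>) * t powr p) * (1 - y * t) powr q)"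
    if t: "t \<in> {0..1}" for t
  proof -
    have "y - y * t = y * (1 - t)" by (simp add: algebra_simps)
    then have "(y - y * t) powr (-\<mu>) = y powr (-\<mu>) * (1 - t) powr (-\<mu>)"
      using t y by (simp add: powr_mult)
    moreover have "(y * t) powr p = y powr p * t powr p" using t y by (simp add: powr_mult)
    ultimately show ?thesis unfolding f_def by (simp add: powr_diff powr_minus divide_inverse powr_add algebra_simps)
  qed
  ultimately have "((\<lambda>t. y powr (p - \<mu>) * (((1 - t) powr (-\<mu>) * t powr p) * (1 - y * t) powr q)) has_integral I / y) {0..1}"
    by (rule has_integral_eq[rotated])
  then have "y powr (p - \<mu>) * integral {0..1} (\<lambda>t. ((1 - t) powr (-\<mu>) * t powr p) * (1 - y * t) powr q) = I / y"
    by (metis integral_mult_right integral_unique)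
  then have "I = y * y powr (p - \<mu>) * integral {0..1} (\<lambda>t. ((1 - t) powr (-\<mu>) * t powr p) * (1 - y * t) powr q)"
    using y by (simp add: field_simps)
  also have "y * y powr (p - \<mu>) = y powr (1 + p - \<mu>)"
  proof -
    have "y powr (1 + p - \<mu>) = y powr (1 + (p - \<mu>))" by (simp add: algebra_simps)
    also have "\<dots> = y powr 1 * y powr (p - \<mu>)" by (rule powr_add)
    finally show ?thesis using y by simp
  qed
  finally show ?thesis unfolding I_def f_def[abs_def] by simp
qed

lemma A_deriv:
  fixes \<mu> p q x :: real
  assumes prm: "0 < \<mu>" "\<mu> < 1" "-1 < p" "p < 0" "-1 < q" "q < 0" and x: "0 < x" "x < 1"
  shows "\<exists>A'. ((\<lambda>y. integral {0..y} (\<lambda>s. (y - s) powr (-\<mu>) * (s powr p * (1 - s) powr q))) has_real_derivative A') (at x)"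
proof -
  define h where "h t = (1 - t) powr (-\<mu>) * t powr p" for t :: real
  define J where "J y = integral {0..1} (\<lambda>t. h t * (1 - y * t) powr q)" for y
  have hi: "h integrable_on {0..1}"
  proof -
    have "(\<lambda>t. \<bar>t-0\<bar> powr p * \<bar>t-1\<bar> powr (-\<mu>) * \<bar>t-2\<bar> powr 0) integrable_on {0..1}"
      using prm by (intro three_pt_integrable) auto
    then show ?thesis
      by (rule integrable_eq) (auto simp: h_def abs_if mult.commute)
  qed
  have hnn: "0 \<le> h t" for t by (simp add: h_def)
  have Jd: "(J has_real_derivative integral {0..1} (\<lambda>t. h t * (- q * t * (1 - x * t) powr (q - 1)))) (at x)"
    unfolding J_def
  proof (rule param_deriv[OF hi hnn, where U="{..<1}"])
    show "open {..<1::real}" by simp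
    show "x \<in> {..<1}" using x by simp
    show "((\<lambda>y. (1 - y * t) powr q) has_real_derivative - q * t * (1 - y * t) powr (q - 1)) (at y)"
      if "y \<in> {..<1}" "t \<in> {0..1}" for y t
    proof -
      have "0 < 1 - y * t"
      proof (cases "y \<le> 0")
        case True then have "y * t \<le> 0" using that by (intro mult_nonpos_nonneg) auto
        then show ?thesis by linarith
      next
        case False then have "y * t \<le> y * 1" using that by (intro mult_left_mono) auto
        then show ?thesis using that by simp
      qed
      then show ?thesis by (auto intro!: derivative_eq_intros simp: algebra_simps)
    qed
    have pos: "0 < 1 - y * t" if "y < 1" "0 \<le> t" "t \<le> 1" for y t :: real
    proof (cases "y \<le> 0")
      case True then have "y * t \<le> 0" using that by (intro mult_nonpos_nonneg) auto
      then show ?thesis by linarith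
    next
      case False then have "y * t \<le> y * 1" using that by (intro mult_left_mono) auto
      then show ?thesis using that by simp
    qed
    show "continuous_on ({..<1} \<times> {0..1}) (\<lambda>(y, t). - q * t * (1 - y * t) powr (q - 1))"
      apply (auto intro!: continuous_intros simp: case_prod_beta)
      using pos by fastforce
    show "continuous_on {0..1} (\<lambda>t. (1 - y * t) powr q)" if "y \<in> {..<1}" for y
      apply (auto intro!: continuous_intros)
      using pos that by fastforce
  qed
  have "((\<lambda>y. y powr (1 + p - \<mu>) * J y) has_real_derivative
        (1 + p - \<mu>) * x powr (1 + p - \<mu> - 1) * J x + x powr (1 + p - \<mu>) * integral {0..1} (\<lambda>t. h t * (- q * t * (1 - x * t) powr (q - 1)))) (at x)"
    using x by (auto intro!: derivative_eq_intros Jd)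
  then have "((\<lambda>y. integral {0..y} (\<lambda>s. (y - s) powr (-\<mu>) * (s powr p * (1 - s) powr q))) has_real_derivative
        (1 + p - \<mu>) * x powr (1 + p - \<mu> - 1) * J x + x powr (1 + p - \<mu>) * integral {0..1} (\<lambda>t. h t * (- q * t * (1 - x * t) powr (q - 1)))) (at x)"
  proof (rule has_field_derivative_transform_within_open[where S="{0<..<1}"])
    show "open {0<..<1::real}" by simp
    show "x \<in> {0<..<1}" using x by simp
    show "y powr (1 + p - \<mu>) * J y = integral {0..y} (\<lambda>s. (y - s) powr (-\<mu>) * (s powr p * (1 - s) powr q))"
      if "y \<in> {0<..<1}" for y
      using A_scaled[OF prm, of y] that by (simp add: J_def h_def)
  qed
  then show ?thesis by blast
qed

lemma powr_not_integrable_right: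
  fixes a c p :: real
  assumes p: "p \<le> -1" and c: "0 < c" "c \<le> 1" and i: "(\<lambda>s. \<bar>s - a\<bar> powr p) integrable_on {a..a+c}"
  shows False
proof -
  define I where "I = integral {a..a+c} (\<lambda>s. \<bar>s - a\<bar> powr p)"
  define \<epsilon> where "\<epsilon> = c * exp (- (\<bar>I\<bar> + 1))"
  have e0: "0 < \<epsilon>" using c by (simp add: \<epsilon>_def)
  have ec: "\<epsilon> < c" using c by (simp add: \<epsilon>_def)
  have lne: "ln \<epsilon> = ln c - (\<bar>I\<bar> + 1)" using c by (simp add: \<epsilon>_def ln_mult)
  have i2: "(\<lambda>s. \<bar>s - a\<bar> powr p) integrable_on {a+\<epsilon>..a+c}"
    by (rule integrable_subinterval_real[OF i]) (use e0 in auto)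
  have ftc: "((\<lambda>s. 1 / (s - a)) has_integral (ln (a + c - a) - ln (a + \<epsilon> - a))) {a+\<epsilon>..a+c}"
  proof (rule fundamental_theorem_of_calculus)
    show "a + \<epsilon> \<le> a + c" using ec by simp
    show "((\<lambda>s. ln (s - a)) has_vector_derivative 1 / (s - a)) (at s within {a + \<epsilon>..a + c})"
      if "s \<in> {a + \<epsilon>..a + c}" for s
      using that e0 by (auto intro!: derivative_eq_intros simp: has_real_derivative_iff_has_vector_derivative[symmetric])
  qed
  then have v: "integral {a+\<epsilon>..a+c} (\<lambda>s. 1 / (s - a)) = \<bar>I\<bar> + 1" using lne by (simp add: integral_unique)
  have "integral {a+\<epsilon>..a+c} (\<lambda>s. 1 / (s - a)) \<le> integral {a+\<epsilon>..a+c} (\<lambda>s. \<bar>s - a\<bar> powr p)"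
  proof (rule integral_le)
    show "(\<lambda>s. 1 / (s - a)) integrable_on {a + \<epsilon>..a + c}" using ftc by blast
    show "(\<lambda>s. \<bar>s - a\<bar> powr p) integrable_on {a + \<epsilon>..a + c}" by (rule i2)
    show "1 / (s - a) \<le> \<bar>s - a\<bar> powr p" if "s \<in> {a + \<epsilon>..a + c}" for s
    proof -
      have "\<bar>s - a\<bar> powr (-1) \<le> \<bar>s - a\<bar> powr p" using that p c e0 by (intro powr_mono') auto
      then show ?thesis using that e0 by simp
    qed
  qed
  also have "\<dots> \<le> I" unfolding I_def
    by (rule integral_subset_le[OF _ i2 i]) (use e0 in auto)
  finally show False using v by simp
qed

lemma powr_not_integrable_left:
  fixes a c p :: real
  assumes p: "p \<le> -1" and c: "0 < c" "c \<le> 1" and i: "(\<lambda>s. \<bar>s - a\<bar> powr p) integrable_on {a-c..a}"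
  shows False
proof -
  have "(\<lambda>s. \<bar>-s - a\<bar> powr p) integrable_on {-a..-(a-c)}"
    using Henstock_Kurzweil_Integration.integrable_reflect_real[where f="\<lambda>s. \<bar>s - a\<bar> powr p" and a="a - c" and b=a, THEN iffD2, OF i] by simp
  then have "(\<lambda>s. \<bar>s - (-a)\<bar> powr p) integrable_on {-a..(-a)+c}"
    by (simp add: abs_minus_commute algebra_simps)
  then show False by (rule powr_not_integrable_right[OF p c])
qed


lemma powr_lower:
  fixes s q :: real assumes "1/2 \<le> s" "s \<le> 1"
  shows "min 1 ((1/2) powr q) \<le> s powr q"
proof (cases "q \<ge> 0")
  case True
  then have "(1/2) powr q \<le> s powr q" using assms by (intro powr_mono2) auto
  then show ?thesis by simp
next
  case False
  then have "1 powr q \<le> s powr q" using assms by (intro powr_mono2') auto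
  then show ?thesis by simp
qed

lemma exps_gt:
  fixes p q :: real
  assumes i: "(\<lambda>x. x powr p * (1 - x) powr q) integrable_on {0..1}"
  shows "-1 < p" "-1 < q"
proof -
  define m where "m = min 1 ((1/2::real) powr q)"
  define m' where "m' = min 1 ((1/2::real) powr p)"
  have m0: "0 < m" "0 < m'" by (auto simp: m_def m'_def)
  show "-1 < p"
  proof (rule ccontr)
    assume "\<not> -1 < p" then have p: "p \<le> -1" by simp
    have "(\<lambda>s. \<bar>s - 0\<bar> powr p) integrable_on {0..0+1/2}"
    proof (rule measurable_bounded_by_integrable_imp_integrable_real)
      show "(\<lambda>s. \<bar>s - 0\<bar> powr p) \<in> borel_measurable (lebesgue_on {0..0+1/2})"
        by (rule borel_lebesgue_on) measurable
      have "(\<lambda>x. x powr p * (1 - x) powr q) integrable_on {0..1/2}"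
        by (rule integrable_subinterval_real[OF i]) auto
      from integrable_cmul[OF this, of "1/m"]
      show "(\<lambda>x. 1/m * (x powr p * (1 - x) powr q)) integrable_on {0..0+1/2}" by simp
      show "\<bar>\<bar>s - 0\<bar> powr p\<bar> \<le> 1/m * (s powr p * (1 - s) powr q)" if "s \<in> {0..0+1/2}" for s
      proof -
        have "m \<le> (1 - s) powr q" unfolding m_def by (rule powr_lower) (use that in auto)
        then have "1 \<le> 1/m * (1 - s) powr q" using m0 by (simp add: field_simps)
        then have "s powr p * 1 \<le> s powr p * (1/m * (1 - s) powr q)" by (intro mult_left_mono) auto
        then show ?thesis using that by (simp add: ac_simps)
      qed
    qed auto
    then show False using powr_not_integrable_right[of p "1/2" 0] p by auto
  qed
  show "-1 < q"
  proof (rule ccontr)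
    assume "\<not> -1 < q" then have q: "q \<le> -1" by simp
    have "(\<lambda>s. \<bar>s - 1\<bar> powr q) integrable_on {1-1/2..1}"
    proof (rule measurable_bounded_by_integrable_imp_integrable_real)
      show "(\<lambda>s. \<bar>s - 1\<bar> powr q) \<in> borel_measurable (lebesgue_on {1-1/2..1})"
        by (rule borel_lebesgue_on) measurable
      have "(\<lambda>x. x powr p * (1 - x) powr q) integrable_on {1/2..1}"
        by (rule integrable_subinterval_real[OF i]) auto
      from integrable_cmul[OF this, of "1/m'"]
      show "(\<lambda>x. 1/m' * (x powr p * (1 - x) powr q)) integrable_on {1-1/2..1}" by simp
      show "\<bar>\<bar>s - 1\<bar> powr q\<bar> \<le> 1/m' * (s powr p * (1 - s) powr q)" if "s \<in> {1-1/2..1}" for s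
      proof -
        have "m' \<le> s powr p" unfolding m'_def by (rule powr_lower) (use that in auto)
        then have "1 \<le> 1/m' * s powr p" using m0 by (simp add: field_simps)
        then have "(1 - s) powr q * 1 \<le> (1 - s) powr q * (1/m' * s powr p)" by (intro mult_left_mono) auto
        moreover have "\<bar>s - 1\<bar> = 1 - s" using that by auto
        ultimately show ?thesis by (simp add: ac_simps)
      qed
    qed auto
    then show False using powr_not_integrable_left[of q "1/2" 1] q by auto
  qed
qed

definition lg :: "complex \<Rightarrow> complex" where
  "lg z = Ln (-\<i> * z) + \<i> * of_real pi / 2"

definition okp :: "complex \<Rightarrow> bool" where
  "okp z \<longleftrightarrow> 0 < Im z \<or> Re z \<noteq> 0"

lemma okp_nonpos: "okp z \<Longrightarrow> -\<i> * z \<notin> \<real>\<^sub>\<le>\<^sub>0"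
  by (auto simp: okp_def complex_nonpos_Reals_iff)

lemma okp_nz: "okp z \<Longrightarrow> z \<noteq> 0"
  by (auto simp: okp_def)

lemma exp_ii_half: "exp (\<i> * of_real pi / 2) = \<i>"
  using exp_Ln[of \<i>] Ln_ii by simp

lemma lg_deriv: "okp z \<Longrightarrow> (lg has_field_derivative inverse z) (at z)"
proof -
  assume z: "okp z"
  have d1: "((\<lambda>z. -\<i> * z) has_field_derivative -\<i>) (at z)"
    by (auto intro!: derivative_eq_intros)
  have d2: "(Ln has_field_derivative inverse (-\<i> * z)) (at (-\<i> * z))"
    by (rule has_field_derivative_Ln[OF okp_nonpos[OF z]])
  have "((\<lambda>z. Ln (-\<i> * z)) has_field_derivative inverse (-\<i> * z) * (-\<i>)) (at z)"
    using DERIV_chain2[OF d2 d1] .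
  from DERIV_add[OF this DERIV_const[of "\<i> * of_real pi / 2"]]
  have "((\<lambda>z. Ln (-\<i> * z) + \<i> * of_real pi / 2) has_field_derivative inverse (-\<i> * z) * (-\<i>) + 0) (at z)" .
  moreover have "inverse (-\<i> * z) * (-\<i>) + 0 = inverse z" using okp_nz[OF z]
    by (simp add: field_simps)
  ultimately show ?thesis unfolding lg_def[abs_def] by simp
qed

lemma exp_lg: "z \<noteq> 0 \<Longrightarrow> exp (lg z) = z"
proof -
  assume "z \<noteq> 0"
  then have "exp (lg z) = (-\<i> * z) * \<i>" by (simp add: lg_def exp_add exp_Ln exp_ii_half)
  also have "\<dots> = z" by (simp add: algebra_simps)
  finally show ?thesis .
qed

lemma Re_lg: "z \<noteq> 0 \<Longrightarrow> Re (lg z) = ln (norm z)"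
  by (simp add: lg_def norm_mult)

lemma lg_pos: "0 < t \<Longrightarrow> lg (of_real t) = of_real (ln t)"
proof -
  assume t: "0 < t"
  have "Ln (-\<i> * of_real t) = of_real (ln t) - \<i> * of_real pi / 2"
  proof (rule Ln_unique)
    have "exp (- (\<i> * of_real pi / 2)) = inverse \<i>"
      by (subst exp_minus) (simp add: exp_ii_half)
    then have e: "exp (- (\<i> * of_real pi / 2)) = -\<i>" by simp
    have "exp (of_real (ln t) - \<i> * of_real pi / 2) = exp (of_real (ln t)) * exp (- (\<i> * of_real pi / 2))"
      by (simp add: exp_add[symmetric])
    also have "\<dots> = of_real t * (-\<i>)" using t e by (simp add: exp_of_real)
    finally show "exp (of_real (ln t) - \<i> * of_real pi / 2) = -\<i> * of_real t" by simp
  qed (use pi_gt_zero in \<open>auto simp: field_simps\<close>)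
  then show ?thesis by (simp add: lg_def)
qed

lemma lg_neg: "t < 0 \<Longrightarrow> lg (of_real t) = of_real (ln (-t)) + \<i> * of_real pi"
proof -
  assume t: "t < 0"
  have "Ln (-\<i> * of_real t) = of_real (ln (-t)) + \<i> * of_real pi / 2"
  proof (rule Ln_unique)
    show "exp (of_real (ln (-t)) + \<i> * of_real pi / 2) = -\<i> * of_real t"
      using t by (simp add: exp_add exp_of_real exp_ii_half)
  qed (use pi_gt_zero in auto)
  then show ?thesis by (simp add: lg_def)
qed

lemma lg_diff:
  fixes c :: real
  assumes w: "0 \<le> Im w" "w \<noteq> 0" "w \<noteq> of_real c" and c: "0 \<le> c"
  shows "lg (w - of_real c) - lg w = Ln (1 - of_real c / w)"
proof -
  define u where "u = -\<i> * w"
  define v where "v = -\<i> * (w - of_real c)"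
  have u0: "u \<noteq> 0" and v0: "v \<noteq> 0" using w by (auto simp: u_def v_def)
  have Ru: "0 \<le> Re u" and Rv: "0 \<le> Re v" using w by (auto simp: u_def v_def)
  have iu: "\<bar>Im (Ln u)\<bar> \<le> pi/2" using Re_Ln_pos_le[OF u0] Ru by simp
  have iv: "\<bar>Im (Ln v)\<bar> \<le> pi/2" using Re_Ln_pos_le[OF v0] Rv by simp
  have "lg (w - of_real c) - lg w = Ln v - Ln u" by (simp add: lg_def u_def v_def)
  moreover have "Ln (1 - of_real c / w) = Ln v - Ln u"
  proof (rule Ln_unique)
    show "exp (Ln v - Ln u) = 1 - of_real c / w"
      using u0 v0 w by (simp add: exp_diff u_def v_def field_simps)
    show "Im (Ln v - Ln u) \<le> pi" using iu iv by simp
    show "- pi < Im (Ln v - Ln u)"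
    proof (rule ccontr)
      assume "\<not> - pi < Im (Ln v - Ln u)"
      then have a: "Im (Ln v) = - (pi/2)" "Im (Ln u) = pi/2" using iu iv by auto
      have "Im (exp (Ln u)) = exp (Re (Ln u)) * sin (Im (Ln u))" by (rule Im_exp)
      then have "Im u > 0" using a u0 by (simp add: exp_Ln)
      moreover have "Im (exp (Ln v)) = exp (Re (Ln v)) * sin (Im (Ln v))" by (rule Im_exp)
      then have "Im v < 0" using a v0 by (simp add: exp_Ln)
      ultimately show False using c by (simp add: u_def v_def)
    qed
  qed
  ultimately show ?thesis by simp
qed

lemma lg_real: "y \<noteq> 0 \<Longrightarrow> lg (of_real y) = of_real (ln \<bar>y\<bar>) + \<i> * of_real (if y < 0 then pi else 0)"
  by (cases "y < 0") (auto simp: lg_neg lg_pos)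

locale cfg =
  fixes \<mu> p q x :: real
  assumes mu0: "0 < \<mu>" and mu1: "\<mu> < 1" and p0: "-1 < p" and p1: "p < 0"
    and q0: "-1 < q" and q1: "q < 0" and pq: "p + q = \<mu> - 1" and x0: "0 < x" and x1: "x < 1"
begin

definition G :: "complex \<Rightarrow> complex" where
  "G z = exp (- of_real \<mu> * lg (z - of_real x) + of_real p * lg z + of_real q * lg (z - 1))"

definition D :: "real \<Rightarrow> real" where
  "D t = \<bar>t\<bar> powr p * \<bar>t - x\<bar> powr (-\<mu>) * \<bar>t - 1\<bar> powr q"

definition E :: "real \<Rightarrow> real" where
  "E t = (if 0 < t \<and> t < x then sin (pi * p) * D t else if x < t \<and> t < 1 then sin (pi * q) * D t else 0)"

lemma D_integrable: "D integrable_on {L..U}"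
  using three_pt_integrable[of 0 x 1 p "-\<mu>" q L U] x0 x1 p0 p1 q0 q1 mu0 mu1
  unfolding D_def[abs_def] by simp

lemma G_norm:
  assumes "z \<noteq> 0" "z \<noteq> of_real x" "z \<noteq> 1"
  shows "norm (G z) = norm z powr p * norm (z - of_real x) powr (-\<mu>) * norm (z - 1) powr q"
proof -
  have nz: "z - of_real x \<noteq> 0" "z - 1 \<noteq> 0" using assms by auto
  have "norm (G z) = exp (- \<mu> * ln (norm (z - of_real x)) + p * ln (norm z) + q * ln (norm (z - 1)))"
    unfolding G_def using assms nz by (simp add: Re_lg)
  also have "\<dots> = norm z powr p * norm (z - of_real x) powr (-\<mu>) * norm (z - 1) powr q"
    using assms nz unfolding powr_def by (simp add: exp_add[symmetric] exp_diff[symmetric] algebra_simps)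
  finally show ?thesis .
qed

lemma G_bound:
  assumes t: "t \<noteq> 0" "t \<noteq> x" "t \<noteq> 1" and e: "0 \<le> e"
  shows "norm (G (of_real t + \<i> * of_real e)) \<le> D t"
proof -
  define z where "z = of_real t + \<i> * of_real e"
  have ge: "\<bar>t - a\<bar> \<le> norm (z - of_real a)" for a
  proof -
    have "z - of_real a = Complex (t - a) e" by (simp add: z_def complex_eq_iff)
    then show ?thesis by (simp add: cmod_def real_sqrt_ge_abs1)
  qed
  have ne: "z \<noteq> 0" "z \<noteq> of_real x" "z \<noteq> 1"
    using ge[of 0] ge[of x] ge[of 1] t by (auto simp: abs_if split: if_splits)
  have "norm (G z) = norm z powr p * norm (z - of_real x) powr (-\<mu>) * norm (z - 1) powr q"
    by (rule G_norm[OF ne])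
  also have "\<dots> \<le> \<bar>t\<bar> powr p * \<bar>t - x\<bar> powr (-\<mu>) * \<bar>t - 1\<bar> powr q"
  proof -
    have a: "norm z powr p \<le> \<bar>t\<bar> powr p" using ge[of 0] t p1 by (intro powr_mono2') auto
    have b: "norm (z - of_real x) powr (-\<mu>) \<le> \<bar>t - x\<bar> powr (-\<mu>)" using ge[of x] t mu0 by (intro powr_mono2') auto
    have c: "norm (z - 1) powr q \<le> \<bar>t - 1\<bar> powr q" using ge[of 1] t q1 by (intro powr_mono2') auto
    show ?thesis using a b c by (intro mult_mono) auto
  qed
  finally show ?thesis by (simp add: z_def D_def)
qed

lemma G_real:
  assumes t: "t \<noteq> 0" "t \<noteq> x" "t \<noteq> 1"
  shows "Im (G (of_real t)) = E t"
proof -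
  define m where "m = - \<mu> * (if t < x then 1 else 0) + p * (if t < 0 then 1 else 0) + q * (if t < 1 then 1 else 0)"
  define Lr where "Lr = - \<mu> * ln \<bar>t - x\<bar> + p * ln \<bar>t\<bar> + q * ln \<bar>t - 1\<bar>"
  have "G (of_real t) = exp (of_real Lr + \<i> * of_real (pi * m))"
  proof -
    have l0: "lg (of_real t) = of_real (ln \<bar>t\<bar>) + \<i> * of_real (if t < 0 then pi else 0)"
      using lg_real[of t] t by simp
    have l1: "lg (of_real t - of_real x) = of_real (ln \<bar>t - x\<bar>) + \<i> * of_real (if t < x then pi else 0)"
      using lg_real[of "t - x"] t by simp
    have l2: "lg (of_real t - 1) = of_real (ln \<bar>t - 1\<bar>) + \<i> * of_real (if t < 1 then pi else 0)"
      using lg_real[of "t - 1"] t by simp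
    show ?thesis unfolding G_def l0 l1 l2
      by (rule arg_cong[where f=exp]) (cases "t < x"; cases "t < 0"; cases "t < 1"; simp add: Lr_def m_def algebra_simps)
  qed
  then have "Im (G (of_real t)) = exp Lr * sin (pi * m)" by (simp add: Im_exp)
  moreover have "exp Lr = D t" using t unfolding Lr_def D_def powr_def by (simp add: exp_add[symmetric] exp_diff[symmetric] algebra_simps)
  moreover have "sin (pi * m) = (if 0 < t \<and> t < x then sin (pi * p) else if x < t \<and> t < 1 then sin (pi * q) else 0)"
  proof -
    consider "t < 0" | "0 < t \<and> t < x" | "x < t \<and> t < 1" | "1 < t" using t by linarith
    then show ?thesis
    proof cases
      case 1
      then have "m = -1" using x0 x1 pq by (simp add: m_def)
      then show ?thesis using 1 x0 by simp
    next
      case 2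
      then have "m = -1 - p" using x0 x1 pq by (simp add: m_def)
      then have "pi * m = - (pi * p) - pi" by (simp add: right_diff_distrib)
      then have "sin (pi * m) = sin (pi * p)"
        by (simp add: sin_diff) 
      then show ?thesis using 2 by simp
    next
      case 3
      then show ?thesis using x0 by (simp add: m_def)
    next
      case 4
      then show ?thesis using x1 by (simp add: m_def)
    qed
  qed
  ultimately show ?thesis by (simp add: E_def)
qed

end

lemma lg_chain [derivative_intros]:
  "okp (f z) \<Longrightarrow> (f has_field_derivative f') (at z within S) \<Longrightarrow>
   ((\<lambda>z. lg (f z)) has_field_derivative inverse (f z) * f') (at z within S)"
  by (rule DERIV_chain2[OF lg_deriv])

context cfg begin

lemma G_deriv:
  assumes "okp z" "okp (z - of_real x)" "okp (z - 1)"
  shows "(G has_field_derivative G z * (- of_real \<mu> * inverse (z - of_real x) + of_real p * inverse z + of_real q * inverse (z - 1))) (at z)"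
  unfolding G_def[abs_def]
  by (rule derivative_eq_intros refl assms | simp)+

lemma G_cont: "t \<noteq> 0 \<Longrightarrow> t \<noteq> x \<Longrightarrow> t \<noteq> 1 \<Longrightarrow> isCont G (of_real t)"
  by (rule DERIV_isCont, rule G_deriv) (auto simp: okp_def)

lemma G_shift_holo:
  assumes e: "0 < e"
  shows "(\<lambda>z. G (z + \<i> * of_real e)) holomorphic_on {z. - e < Im z}"
proof -
  have "(\<lambda>z. G (z + \<i> * of_real e)) field_differentiable (at z)" if "- e < Im z" for z
  proof -
    have "okp (z + \<i> * of_real e)" "okp (z + \<i> * of_real e - of_real x)" "okp (z + \<i> * of_real e - 1)"
      using that by (auto simp: okp_def)
    note ok = this
    have dg: "((\<lambda>z. z + \<i> * of_real e) has_field_derivative 1) (at z)" by (auto intro!: derivative_eq_intros)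
    from DERIV_chain2[where f=G and g="\<lambda>z. z + \<i> * of_real e", OF G_deriv[OF ok] dg]
    show ?thesis unfolding field_differentiable_def by blast
  qed
  then show ?thesis by (auto simp: holomorphic_on_def field_differentiable_at_within)
qed

lemma wG_eq:
  assumes w: "0 \<le> Im w" "w \<noteq> 0" "w \<noteq> of_real x" "w \<noteq> 1"
  shows "w * G w = exp (- of_real \<mu> * Ln (1 - of_real x * inverse w) + of_real q * Ln (1 - inverse w))"
proof -
  have d1: "lg (w - of_real x) = lg w + Ln (1 - of_real x / w)"
    using lg_diff[of w x] w x0 by (simp add: algebra_simps)
  have d2: "lg (w - 1) = lg w + Ln (1 - 1 / w)"
    using lg_diff[of w 1] w by (simp add: algebra_simps)
  have "w * G w = exp (lg w) * G w" using exp_lg w by simp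
  also have "\<dots> = exp (lg w + (- of_real \<mu> * lg (w - of_real x) + of_real p * lg w + of_real q * lg (w - 1)))"
    by (simp add: G_def exp_add)
  also have "lg w + (- of_real \<mu> * lg (w - of_real x) + of_real p * lg w + of_real q * lg (w - 1))
      = (1 + of_real p + of_real q - of_real \<mu>) * lg w - of_real \<mu> * Ln (1 - of_real x / w) + of_real q * Ln (1 - 1 / w)"
    unfolding d1 d2 by (simp add: algebra_simps)
  also have "(1 + of_real p + of_real q - of_real \<mu> :: complex) = 0"
  proof -
    have "1 + p + q - \<mu> = 0" using pq by simp
    then show ?thesis by (metis of_real_0 of_real_1 of_real_add of_real_diff)
  qed
  finally show ?thesis by (simp add: divide_inverse)
qed

lemma wG_asym:
  assumes eta: "0 < \<eta>"
  shows "\<exists>R0>0. \<forall>w. 0 \<le> Im w \<longrightarrow> R0 \<le> norm w \<longrightarrow> norm (w * G w - 1) \<le> \<eta>"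
proof -
  define \<Phi> where "\<Phi> u = exp (- of_real \<mu> * Ln (1 - of_real x * u) + of_real q * Ln (1 - u))" for u :: complex
  have "isCont \<Phi> 0" unfolding \<Phi>_def
    by (intro continuous_intros) (auto simp: complex_nonpos_Reals_iff)
  moreover have "\<Phi> 0 = 1" by (simp add: \<Phi>_def)
  ultimately have "(\<Phi> \<longlongrightarrow> 1) (at 0)" by (simp add: isCont_def)
  then have "eventually (\<lambda>u. dist (\<Phi> u) 1 < \<eta>) (at 0)" using eta by (simp add: tendsto_iff)
  then obtain d where d: "d > 0" "\<And>u. u \<noteq> 0 \<Longrightarrow> dist u 0 < d \<Longrightarrow> dist (\<Phi> u) 1 < \<eta>"
    by (auto simp: eventually_at)
  define R0 where "R0 = max 2 (2 / d)"
  have "R0 > 0" by (simp add: R0_def)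
  moreover have "norm (w * G w - 1) \<le> \<eta>" if w: "0 \<le> Im w" "R0 \<le> norm w" for w
  proof -
    have n2: "2 \<le> norm w" "2 / d \<le> norm w" using w by (auto simp: R0_def)
    then have nz: "w \<noteq> 0" "w \<noteq> of_real x" "w \<noteq> 1" using x0 x1 by auto
    have "norm (inverse w) < d"
    proof -
      have "norm (inverse w) = 1 / norm w" by (simp add: norm_inverse divide_inverse)
      also have "\<dots> \<le> d / 2" 
      proof -
        have "2 \<le> d * norm w" using n2(2) d(1) by (simp add: field_simps)
        then show ?thesis using n2(1) d(1) by (simp add: divide_le_eq mult.commute)
      qed
      also have "\<dots> < d" using d(1) by simp
      finally show ?thesis .
    qed
    then have "dist (\<Phi> (inverse w)) 1 < \<eta>" using d(2)[of "inverse w"] nz by simp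
    moreover have "w * G w = \<Phi> (inverse w)" using wG_eq[OF w(1) nz] by (simp add: \<Phi>_def)
    ultimately show ?thesis by (simp add: dist_norm)
  qed
  ultimately show ?thesis by blast
qed

end

lemma seg1_far:
  assumes "z \<in> closed_segment (of_real R) (\<i> * of_real R)" "0 \<le> R"
  shows "0 \<le> Im z \<and> R/2 \<le> norm z"
proof -
  obtain u where u: "0 \<le> u" "u \<le> 1" "z = (1 - u) *\<^sub>R of_real R + u *\<^sub>R (\<i> * of_real R)"
    using assms(1) by (auto simp: in_segment)
  have re: "Re z = (1 - u) * R" and im: "Im z = u * R" using u(3) by (simp_all add: scaleR_conv_of_real)
  have "\<bar>Re z\<bar> \<le> norm z" "\<bar>Im z\<bar> \<le> norm z" by (rule abs_Re_le_cmod, rule abs_Im_le_cmod)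
  moreover have "R/2 \<le> (1 - u) * R \<or> R/2 \<le> u * R"
  proof (cases "u \<le> 1/2")
    case True then have "1/2 * R \<le> (1 - u) * R" using assms(2) by (intro mult_right_mono) auto
    then show ?thesis by simp
  next
    case False then have "1/2 * R \<le> u * R" using assms(2) by (intro mult_right_mono) auto
    then show ?thesis by simp
  qed
  moreover have "0 \<le> u * R" "0 \<le> (1 - u) * R" using u assms(2) by auto
  moreover have "Re z \<le> \<bar>Re z\<bar>" "Im z \<le> \<bar>Im z\<bar>" by auto
  ultimately show ?thesis using re im by (elim disjE) linarith+
qed

lemma seg2_far:
  assumes "z \<in> closed_segment (\<i> * of_real R) (of_real (-R))" "0 \<le> R"
  shows "0 \<le> Im z \<and> R/2 \<le> norm z"
proof -
  obtain u where u: "0 \<le> u" "u \<le> 1" "z = (1 - u) *\<^sub>R (\<i> * of_real R) + u *\<^sub>R of_real (-R)"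
    using assms(1) by (auto simp: in_segment)
  have re: "Re z = - u * R" and im: "Im z = (1 - u) * R" using u(3) by (simp_all add: scaleR_conv_of_real)
  have "\<bar>Re z\<bar> \<le> norm z" "\<bar>Im z\<bar> \<le> norm z" by (rule abs_Re_le_cmod, rule abs_Im_le_cmod)
  moreover have "R/2 \<le> (1 - u) * R \<or> R/2 \<le> u * R"
  proof (cases "u \<le> 1/2")
    case True then have "1/2 * R \<le> (1 - u) * R" using assms(2) by (intro mult_right_mono) auto
    then show ?thesis by simp
  next
    case False then have "1/2 * R \<le> u * R" using assms(2) by (intro mult_right_mono) auto
    then show ?thesis by simp
  qed
  moreover have "0 \<le> u * R" "0 \<le> (1 - u) * R" using u assms(2) by auto
  moreover have "\<bar>Re z\<bar> = u * R" using re u assms(2) by simp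
  moreover have "Im z \<le> \<bar>Im z\<bar>" by auto
  ultimately show ?thesis using re im by (elim disjE) linarith+
qed

lemma norm_shift_up:
  assumes "0 \<le> Im z" "0 \<le> e"
  shows "norm z \<le> norm (z + \<i> * of_real e)"
proof -
  have "(Im z)^2 \<le> (Im z + e)^2" using assms by (intro power_mono) auto
  then show ?thesis by (simp add: cmod_def)
qed


context cfg begin

lemma far_bound:
  assumes asym: "\<forall>w. 0 \<le> Im w \<longrightarrow> R/2 \<le> norm w \<longrightarrow> norm (w * G w - 1) \<le> \<eta>"
    and R: "2 \<le> R" and e: "0 < e" and z: "0 \<le> Im z" "R/2 \<le> norm z"
  shows "norm (G (z + \<i> * of_real e) - inverse (z + \<i> * of_real e)) \<le> 2 * \<eta> / R"
proof -
  define w where "w = z + \<i> * of_real e"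
  have nw: "R/2 \<le> norm w" using norm_shift_up[of z e] z e by (simp add: w_def)
  have iw: "0 \<le> Im w" using z e by (simp add: w_def)
  have w0: "w \<noteq> 0" using nw R by auto
  have b: "norm (w * G w - 1) \<le> \<eta>" using asym iw nw by blast
  have "G w - inverse w = (w * G w - 1) / w" using w0 by (simp add: field_simps)
  then have "norm (G w - inverse w) = norm (w * G w - 1) / norm w" by (simp add: norm_divide)
  also have "\<dots> \<le> \<eta> / norm w" using b by (simp add: divide_right_mono)
  also have "\<dots> \<le> \<eta> / (R/2)"
    using nw R b w0 by (intro divide_left_mono) (auto intro: order_trans[OF norm_ge_zero])
  also have "\<dots> = 2 * \<eta> / R" by simp
  finally show ?thesis by (simp add: w_def)
qed

lemma triangle_bound:
  assumes R: "2 \<le> R" and e: "0 < e"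
    and asym: "\<forall>w. 0 \<le> Im w \<longrightarrow> R/2 \<le> norm w \<longrightarrow> norm (w * G w - 1) \<le> \<eta>"
  shows "norm (integral {-R..R} (\<lambda>t. G (of_real t + \<i> * of_real e))
           + (lg (of_real (-R) + \<i> * of_real e) - lg (of_real R + \<i> * of_real e))) \<le> 8 * \<eta>"
proof -
  define Ge where "Ge z = G (z + \<i> * of_real e)" for z
  define F where "F z = inverse (z + \<i> * of_real e)" for z
  define a where "a = (of_real (-R) :: complex)"
  define b where "b = (of_real R :: complex)"
  define c where "c = \<i> * (of_real R :: complex)"
  define H where "H = {z::complex. 0 \<le> Im z}"
  have cH: "convex H" unfolding H_def by (rule convex_halfspace_Im_ge)
  have abcH: "a \<in> H" "b \<in> H" "c \<in> H" using R by (auto simp: H_def a_def b_def c_def)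
  have hull: "convex hull {a,b,c} \<subseteq> H" using cH abcH by (intro hull_minimal) auto
  have holo: "Ge holomorphic_on H"
    using G_shift_holo[OF e] unfolding Ge_def
    by (rule holomorphic_on_subset) (use e in \<open>auto simp: H_def\<close>)
  then have contH: "continuous_on H Ge" by (rule holomorphic_on_imp_continuous_on)
  have segH: "closed_segment u v \<subseteq> H" if "u \<in> H" "v \<in> H" for u v
    using closed_segment_subset[OF that cH] .
  have int: "Ge contour_integrable_on linepath u v" if "u \<in> H" "v \<in> H" for u v
    by (rule contour_integrable_continuous_linepath, rule continuous_on_subset[OF contH segH[OF that]])
  define Iab where "Iab = contour_integral (linepath a b) Ge"
  define Ibc where "Ibc = contour_integral (linepath b c) Ge"
  define Ica where "Ica = contour_integral (linepath c a) Ge"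
  have hab: "(Ge has_contour_integral Iab) (linepath a b)" unfolding Iab_def
    by (rule has_contour_integral_integral, rule int) (use abcH in auto)
  have hbc: "(Ge has_contour_integral Ibc) (linepath b c)" unfolding Ibc_def
    by (rule has_contour_integral_integral, rule int) (use abcH in auto)
  have hca: "(Ge has_contour_integral Ica) (linepath c a)" unfolding Ica_def
    by (rule has_contour_integral_integral, rule int) (use abcH in auto)
  have "(Ge has_contour_integral (Iab + (Ibc + Ica))) (linepath a b +++ linepath b c +++ linepath c a)"
    by (intro has_contour_integral_join hab hbc hca valid_path_join) auto
  moreover have "(Ge has_contour_integral 0) (linepath a b +++ linepath b c +++ linepath c a)"
    by (rule Cauchy_theorem_triangle, rule holomorphic_on_subset[OF holo hull])
  ultimately have sum0: "Iab + (Ibc + Ica) = 0" by (rule has_contour_integral_unique)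
  have Iab_eq: "Iab = integral {-R..R} (\<lambda>t. G (of_real t + \<i> * of_real e))"
  proof -
    have "((\<lambda>t. Ge (of_real t)) has_integral Iab) {Re a..Re b}"
      using hab R by (subst (asm) has_contour_integral_linepath_Reals_iff) (auto simp: a_def b_def)
    then show ?thesis by (simp add: a_def b_def Ge_def integral_unique)
  qed
  have primF: "(F has_contour_integral (lg (v + \<i> * of_real e) - lg (u + \<i> * of_real e))) (linepath u v)"
    if "u \<in> H" "v \<in> H" for u v
  proof -
    have "((\<lambda>z. lg (z + \<i> * of_real e)) has_field_derivative F z) (at z within H)" if "z \<in> H" for z
    proof -
      have "okp (z + \<i> * of_real e)" using that e by (simp add: H_def okp_def)
      moreover have "((\<lambda>z. z + \<i> * of_real e) has_field_derivative 1) (at z within H)"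
        by (auto intro!: derivative_eq_intros)
      ultimately have "((\<lambda>z. lg (z + \<i> * of_real e)) has_field_derivative inverse (z + \<i> * of_real e) * 1) (at z within H)"
        by (rule lg_chain[where f="\<lambda>z. z + \<i> * of_real e"])
      then show ?thesis by (simp add: F_def)
    qed
    note d = this
    have "(F has_contour_integral ((\<lambda>z. lg (z + \<i> * of_real e)) (pathfinish (linepath u v)) - (\<lambda>z. lg (z + \<i> * of_real e)) (pathstart (linepath u v)))) (linepath u v)"
      by (rule contour_integral_primitive[OF d]) (use segH[OF that] in auto)
    then show ?thesis by simp
  qed
  have errb: "norm (I - (lg (v + \<i> * of_real e) - lg (u + \<i> * of_real e))) \<le> 2 * \<eta> / R * norm (v - u)"
    if hI: "(Ge has_contour_integral I) (linepath u v)" and uv: "u \<in> H" "v \<in> H"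
      and far: "\<And>z. z \<in> closed_segment u v \<Longrightarrow> R/2 \<le> norm z" for I u v
  proof (rule has_contour_integral_bound_linepath)
    show "((\<lambda>z. Ge z - F z) has_contour_integral (I - (lg (v + \<i> * of_real e) - lg (u + \<i> * of_real e)))) (linepath u v)"
      by (rule has_contour_integral_diff[OF hI primF[OF uv]])
    have "norm (Ge z - F z) \<le> 2 * \<eta> / R" if "z \<in> closed_segment u v" for z
      using far_bound[OF asym R e] segH[OF uv] that far[OF that] by (auto simp: Ge_def F_def H_def)
    then show "\<And>z. z \<in> closed_segment u v \<Longrightarrow> norm (Ge z - F z) \<le> 2 * \<eta> / R" .
    show "0 \<le> 2 * \<eta> / R"
    proof -
      have "norm (c * G c - 1) \<le> \<eta>" using asym R by (auto simp: c_def norm_mult)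
      then have "0 \<le> \<eta>" by (auto intro: order_trans[OF norm_ge_zero])
      then show ?thesis using R by simp
    qed
  qed
  have eta0: "0 \<le> \<eta>"
  proof -
    have "norm (c * G c - 1) \<le> \<eta>" using asym R by (auto simp: c_def norm_mult)
    then show ?thesis by (auto intro: order_trans[OF norm_ge_zero])
  qed
  have len: "norm (c - b) \<le> 2 * R" "norm (a - c) \<le> 2 * R"
  proof -
    have "norm (c - b) \<le> norm c + norm b" by (rule norm_triangle_ineq4)
    then show "norm (c - b) \<le> 2 * R" using R by (simp add: c_def b_def norm_mult)
    have "norm (a - c) \<le> norm a + norm c" by (rule norm_triangle_ineq4)
    then show "norm (a - c) \<le> 2 * R" using R by (simp add: c_def a_def norm_mult)
  qed
  have e1: "norm (Ibc - (lg (c + \<i> * of_real e) - lg (b + \<i> * of_real e))) \<le> 4 * \<eta>"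
  proof -
    have "norm (Ibc - (lg (c + \<i> * of_real e) - lg (b + \<i> * of_real e))) \<le> 2 * \<eta> / R * norm (c - b)"
      by (rule errb[OF hbc abcH(2,3)]) (use seg1_far R in \<open>auto simp: b_def c_def\<close>)
    also have "\<dots> \<le> 2 * \<eta> / R * (2 * R)" using len eta0 R by (intro mult_left_mono) auto
    also have "\<dots> = 4 * \<eta>" using R by simp
    finally show ?thesis .
  qed
  have e2: "norm (Ica - (lg (a + \<i> * of_real e) - lg (c + \<i> * of_real e))) \<le> 4 * \<eta>"
  proof -
    have "norm (Ica - (lg (a + \<i> * of_real e) - lg (c + \<i> * of_real e))) \<le> 2 * \<eta> / R * norm (a - c)"
      by (rule errb[OF hca abcH(3,1)]) (use seg2_far R in \<open>auto simp: a_def c_def\<close>)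
    also have "\<dots> \<le> 2 * \<eta> / R * (2 * R)" using len eta0 R by (intro mult_left_mono) auto
    also have "\<dots> = 4 * \<eta>" using R by simp
    finally show ?thesis .
  qed
  have "Iab + (lg (a + \<i> * of_real e) - lg (b + \<i> * of_real e))
      = - ((Ibc - (lg (c + \<i> * of_real e) - lg (b + \<i> * of_real e))) + (Ica - (lg (a + \<i> * of_real e) - lg (c + \<i> * of_real e))))"
    using sum0 by (simp add: algebra_simps)
  then have "norm (Iab + (lg (a + \<i> * of_real e) - lg (b + \<i> * of_real e))) \<le> 4 * \<eta> + 4 * \<eta>"
    using e1 e2 by (metis norm_minus_cancel norm_triangle_le add_mono)
  then show ?thesis by (simp add: Iab_eq a_def b_def)
qed

end

context cfg begin

lemma shift_integrable: "0 < e \<Longrightarrow> (\<lambda>t. G (of_real t + \<i> * of_real e)) integrable_on {L..U}"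
proof -
  assume e: "0 < e"
  have "continuous_on {z. - e < Im z} (\<lambda>z. G (z + \<i> * of_real e))"
    by (rule holomorphic_on_imp_continuous_on[OF G_shift_holo[OF e]])
  then have "continuous_on {L..U} (\<lambda>t. G (of_real t + \<i> * of_real e))"
    by (rule continuous_on_compose2[where f="of_real"]) (use e in \<open>auto intro: continuous_intros\<close>)
  then show ?thesis by (rule integrable_continuous_interval)
qed

lemma negl3: "negligible {t::real. t = 0 \<or> t = x \<or> t = 1}"
proof -
  have "{t::real. t = 0 \<or> t = x \<or> t = 1} = {0, x, 1}" by auto
  then show ?thesis by (simp add: negligible_finite)
qed

lemma dom_limit:
  defines "e \<equiv> \<lambda>n. inverse (real (Suc n))"
  shows "(\<lambda>t. G (of_real t)) integrable_on {L..U}"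
    and "(\<lambda>n. integral {L..U} (\<lambda>t. G (of_real t + \<i> * of_real (e n)))) \<longlonglongrightarrow> integral {L..U} (\<lambda>t. G (of_real t))"
proof -
  define S where "S = {L..U} - {0, x, 1}"
  have e0: "0 < e n" for n by (simp add: e_def)
  have spike: "negligible {t \<in> {L..U} - S. f t \<noteq> 0}" "negligible {t \<in> S - {L..U}. f t \<noteq> 0}" for f :: "real \<Rightarrow> 'a::real_normed_vector"
  proof -
    show "negligible {t \<in> {L..U} - S. f t \<noteq> 0}"
      by (rule negligible_subset[OF negl3]) (auto simp: S_def)
    show "negligible {t \<in> S - {L..U}. f t \<noteq> 0}" by (rule negligible_subset[of "{}"]) (auto simp: S_def)
  qed
  have fint: "(\<lambda>t. G (of_real t + \<i> * of_real (e n))) integrable_on S" for n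
    by (rule integrable_spike_set[OF shift_integrable[OF e0]]) (rule spike)+
  have hint: "D integrable_on S"
    by (rule integrable_spike_set[OF D_integrable]) (rule spike)+
  have le: "norm (G (of_real t + \<i> * of_real (e n))) \<le> D t" if "t \<in> S" for n t
    using that e0[of n] by (intro G_bound) (auto simp: S_def)
  have conv: "(\<lambda>n. G (of_real t + \<i> * of_real (e n))) \<longlonglongrightarrow> G (of_real t)" if "t \<in> S" for t
  proof -
    have "(\<lambda>n. of_real t + \<i> * of_real (e n)) \<longlonglongrightarrow> (of_real t + \<i> * of_real 0 :: complex)"
      unfolding e_def by (intro tendsto_intros LIMSEQ_inverse_real_of_nat)
    then have "(\<lambda>n. of_real t + \<i> * of_real (e n)) \<longlonglongrightarrow> (of_real t :: complex)" by simp
    moreover have "isCont G (of_real t)" using that by (intro G_cont) (auto simp: S_def)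
    ultimately show ?thesis by (rule isCont_tendsto_compose[rotated])
  qed
  note dc = dominated_convergence[OF fint hint le conv]
  have gS: "(\<lambda>t. G (of_real t)) integrable_on S" by (rule dc(1))
  show "(\<lambda>t. G (of_real t)) integrable_on {L..U}"
    by (rule integrable_spike_set[OF gS]) (use spike in \<open>auto\<close>)
  have eqS: "integral S f = integral {L..U} f" for f :: "real \<Rightarrow> complex"
    by (rule integral_spike_set) (use spike in auto)
  show "(\<lambda>n. integral {L..U} (\<lambda>t. G (of_real t + \<i> * of_real (e n)))) \<longlonglongrightarrow> integral {L..U} (\<lambda>t. G (of_real t))"
    using dc(2) by (simp add: eqS)
qed

lemma limit_bound:
  assumes R: "2 \<le> R"
    and asym: "\<forall>w. 0 \<le> Im w \<longrightarrow> R/2 \<le> norm w \<longrightarrow> norm (w * G w - 1) \<le> \<eta>"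
  shows "norm (integral {-R..R} (\<lambda>t. G (of_real t)) + \<i> * of_real pi) \<le> 8 * \<eta>"
proof -
  define e where "e = (\<lambda>n. inverse (real (Suc n)))"
  have e0: "0 < e n" for n by (simp add: e_def)
  have "e \<longlonglongrightarrow> 0" unfolding e_def by (rule LIMSEQ_inverse_real_of_nat)
  from tendsto_of_real[OF this, where 'a=complex]
  have elim: "(\<lambda>n. of_real (e n) :: complex) \<longlonglongrightarrow> 0" by simp
  have l1: "(\<lambda>n. lg (of_real (-R) + \<i> * of_real (e n))) \<longlonglongrightarrow> lg (of_real (-R))"
  proof -
    have lim: "(\<lambda>n. of_real (-R) + \<i> * of_real (e n)) \<longlonglongrightarrow> (of_real (-R) :: complex)"
      using tendsto_add[OF tendsto_const[of "of_real (-R) :: complex"] tendsto_mult[OF tendsto_const[of \<i>] elim]] by simp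
    have "isCont lg (of_real (-R))" by (rule DERIV_isCont[OF lg_deriv]) (use R in \<open>auto simp: okp_def\<close>)
    from isCont_tendsto_compose[OF this lim] show ?thesis .
  qed
  have l2: "(\<lambda>n. lg (of_real R + \<i> * of_real (e n))) \<longlonglongrightarrow> lg (of_real R)"
  proof -
    have lim: "(\<lambda>n. of_real R + \<i> * of_real (e n)) \<longlonglongrightarrow> (of_real R :: complex)"
      using tendsto_add[OF tendsto_const[of "of_real R :: complex"] tendsto_mult[OF tendsto_const[of \<i>] elim]] by simp
    have "isCont lg (of_real R)" by (rule DERIV_isCont[OF lg_deriv]) (use R in \<open>auto simp: okp_def\<close>)
    from isCont_tendsto_compose[OF this lim] show ?thesis .
  qed
  have lgd: "lg (of_real (-R)) - lg (of_real R) = \<i> * of_real pi"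
    using R lg_neg[of "-R"] lg_pos[of R] by simp
  have "(\<lambda>n. integral {-R..R} (\<lambda>t. G (of_real t + \<i> * of_real (e n)))
        + (lg (of_real (-R) + \<i> * of_real (e n)) - lg (of_real R + \<i> * of_real (e n))))
        \<longlonglongrightarrow> integral {-R..R} (\<lambda>t. G (of_real t)) + (lg (of_real (-R)) - lg (of_real R))"
    unfolding e_def by (intro tendsto_intros dom_limit(2) l1[unfolded e_def] l2[unfolded e_def])
  moreover have "eventually (\<lambda>n. norm (integral {-R..R} (\<lambda>t. G (of_real t + \<i> * of_real (e n)))
        + (lg (of_real (-R) + \<i> * of_real (e n)) - lg (of_real R + \<i> * of_real (e n)))) \<le> 8 * \<eta>) sequentially"
    using triangle_bound[OF R e0 asym] by simp
  ultimately have "norm (integral {-R..R} (\<lambda>t. G (of_real t)) + (lg (of_real (-R)) - lg (of_real R))) \<le> 8 * \<eta>"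
    by (intro Lim_norm_ubound[OF trivial_limit_sequentially]) 
  then show ?thesis using lgd by simp
qed

end

context cfg begin

lemma Im_int:
  assumes R: "2 \<le> R"
  shows "Im (integral {-R..R} (\<lambda>t. G (of_real t))) = sin (pi * p) * integral {0..x} D + sin (pi * q) * integral {x..1} D"
proof -
  have gi: "(\<lambda>t. G (of_real t)) integrable_on {-R..R}" by (rule dom_limit(1))
  have "Im (integral {-R..R} (\<lambda>t. G (of_real t))) = integral {-R..R} (Im \<circ> (\<lambda>t. G (of_real t)))"
    by (rule integral_linear[OF gi bounded_linear_Im, symmetric])
  also have "\<dots> = integral {-R..R} E"
    by (rule integral_spike[OF negl3]) (auto simp: G_real)
  finally have eq: "Im (integral {-R..R} (\<lambda>t. G (of_real t))) = integral {-R..R} E" .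
  have Ei: "E integrable_on {-R..R}"
    by (rule integrable_spike[OF integrable_linear[OF gi bounded_linear_Im] negl3]) (auto simp: G_real)
  have xs: "-R \<le> 0" "0 \<le> x" "x \<le> 1" "1 \<le> R" using R x0 x1 by auto
  have Ei2: "E integrable_on {0..R}" by (rule integrable_subinterval_real[OF Ei]) (use xs in auto)
  have Ei3: "E integrable_on {x..R}" by (rule integrable_subinterval_real[OF Ei]) (use xs in auto)
  have c1: "integral {-R..0} E + integral {0..R} E = integral {-R..R} E"
    by (rule Henstock_Kurzweil_Integration.integral_combine[OF xs(1) _ Ei]) (use xs in auto)
  have c2: "integral {0..x} E + integral {x..R} E = integral {0..R} E"
    by (rule Henstock_Kurzweil_Integration.integral_combine[OF xs(2) _ Ei2]) (use xs in auto)
  have c3: "integral {x..1} E + integral {1..R} E = integral {x..R} E"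
    by (rule Henstock_Kurzweil_Integration.integral_combine[OF xs(3) xs(4) Ei3])
  have z1: "integral {-R..0} E = 0"
  proof -
    have "integral {-R..0} E = integral {-R..0} (\<lambda>t. 0::real)"
      by (rule integral_spike[of "{}"]) (use x0 in \<open>auto simp: E_def\<close>)
    then show ?thesis by simp
  qed
  have z2: "integral {1..R} E = 0"
  proof -
    have "integral {1..R} E = integral {1..R} (\<lambda>t. 0::real)"
      by (rule integral_spike[of "{}"]) (use x1 in \<open>auto simp: E_def\<close>)
    then show ?thesis by simp
  qed
  have a: "integral {0..x} E = sin (pi * p) * integral {0..x} D"
  proof -
    have "integral {0..x} E = integral {0..x} (\<lambda>t. sin (pi * p) * D t)"
      by (rule integral_spike[OF negl3]) (auto simp: E_def)
    then show ?thesis by simp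
  qed
  have b: "integral {x..1} E = sin (pi * q) * integral {x..1} D"
  proof -
    have "integral {x..1} E = integral {x..1} (\<lambda>t. sin (pi * q) * D t)"
      by (rule integral_spike[OF negl3]) (auto simp: E_def)
    then show ?thesis by simp
  qed
  show ?thesis using eq c1 c2 c3 z1 z2 a b by simp
qed

lemma key_identity: "sin (pi * p) * integral {0..x} D + sin (pi * q) * integral {x..1} D = - pi"
proof -
  define S where "S = sin (pi * p) * integral {0..x} D + sin (pi * q) * integral {x..1} D"
  have bnd: "\<bar>S + pi\<bar> \<le> 8 * \<eta>" if eta: "0 < \<eta>" for \<eta>
  proof -
    obtain R0 where R0: "R0 > 0" "\<forall>w. 0 \<le> Im w \<longrightarrow> R0 \<le> norm w \<longrightarrow> norm (w * G w - 1) \<le> \<eta>"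
      using wG_asym[OF eta] by blast
    define R where "R = max 2 (2 * R0)"
    have R: "2 \<le> R" by (simp add: R_def)
    have asym: "\<forall>w. 0 \<le> Im w \<longrightarrow> R/2 \<le> norm w \<longrightarrow> norm (w * G w - 1) \<le> \<eta>"
    proof (intro allI impI)
      fix w :: complex assume "0 \<le> Im w" "R/2 \<le> norm w"
      moreover have "R0 \<le> R/2" by (simp add: R_def)
      ultimately show "norm (w * G w - 1) \<le> \<eta>" using R0(2) by auto
    qed
    have "norm (integral {-R..R} (\<lambda>t. G (of_real t)) + \<i> * of_real pi) \<le> 8 * \<eta>"
      by (rule limit_bound[OF R asym])
    moreover have "\<bar>Im (integral {-R..R} (\<lambda>t. G (of_real t)) + \<i> * of_real pi)\<bar> \<le> norm (integral {-R..R} (\<lambda>t. G (of_real t)) + \<i> * of_real pi)"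
      by (rule abs_Im_le_cmod)
    moreover have "Im (integral {-R..R} (\<lambda>t. G (of_real t)) + \<i> * of_real pi) = S + pi"
      using Im_int[OF R] by (simp add: S_def)
    ultimately show ?thesis by linarith
  qed
  show ?thesis
  proof (rule ccontr)
    assume "\<not> ?thesis"
    then have "0 < \<bar>S + pi\<bar>" by (simp add: S_def)
    then have "\<bar>S + pi\<bar> \<le> 8 * (\<bar>S + pi\<bar> / 16)" using bnd[of "\<bar>S + pi\<bar> / 16"] by simp
    with \<open>0 < \<bar>S + pi\<bar>\<close> show False by simp
  qed
qed

end

lemma sin_neg_interval: "-1 < q \<Longrightarrow> q < 0 \<Longrightarrow> sin (pi * q) < 0"
proof -
  assume q: "-1 < q" "q < 0"
  have "pi * (-q) < pi * 1" using q by (intro mult_strict_left_mono) auto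
  moreover have "0 < pi * (-q)" using q by (intro mult_pos_pos) auto
  ultimately have "0 < sin (pi * (-q))" by (intro sin_gt_zero) auto
  then show ?thesis by simp
qed

lemma sin_nonneg_interval: "0 \<le> p \<Longrightarrow> p < 1 \<Longrightarrow> 0 \<le> sin (pi * p)"
  by (intro sin_ge_zero) (auto simp: mult_le_cancel_left1)

theorem lemma4p3:
  fixes \<alpha> r p q :: real and K :: "real \<Rightarrow> real"
  assumes "1 < \<alpha>" "\<alpha> < 2" "0 < r" "r < 1"
    and "(\<lambda>x. x powr p * (1 - x) powr q) integrable_on {0..1}"
    and "K = (\<lambda>x. integral {0..x} (\<lambda>s. s powr p * (1 - s) powr q))"
    and "3 - \<alpha> + p + q = 1"
    and "r * sin (pi * (- q)) = (1 - r) * sin (pi * (- p))"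
  shows "\<forall>x\<in>{0<..<1}.
           frac_int (2 - \<alpha>) (deriv K) differentiable (at x) \<and>
           frac_int_star (2 - \<alpha>) (deriv K) differentiable (at x) \<and>
           frac_L r \<alpha> K x = 0"
proof
  fix x :: real assume x: "x \<in> {0<..<1}"
  define \<mu> where "\<mu> = \<alpha> - 1"
  have mu: "0 < \<mu>" "\<mu> < 1" using assms(1,2) by (auto simp: \<mu>_def)
  have pq: "p + q = \<mu> - 1" using assms(7) by (simp add: \<mu>_def)
  have p0: "-1 < p" and q0: "-1 < q" using exps_gt[OF assms(5)] by auto
  have sn: "r * sin (pi * q) = (1 - r) * sin (pi * p)" using assms(8) by simp
  have p1: "p < 0"
  proof (rule ccontr)
    assume "\<not> p < 0"
    then have "0 \<le> sin (pi * p)" using pq q0 mu by (intro sin_nonneg_interval) auto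
    moreover have "sin (pi * q) < 0" using \<open>\<not> p < 0\<close> pq q0 mu by (intro sin_neg_interval) auto
    moreover have "0 \<le> 1 - r" using assms(4) by simp
    ultimately have "0 \<le> (1 - r) * sin (pi * p)" "r * sin (pi * q) < 0"
      using assms(3) by (auto intro: mult_nonneg_nonneg mult_pos_neg)
    then show False using sn by linarith
  qed
  have q1: "q < 0"
  proof (rule ccontr)
    assume "\<not> q < 0"
    then have "0 \<le> sin (pi * q)" using pq p0 mu by (intro sin_nonneg_interval) auto
    moreover have "sin (pi * p) < 0" using \<open>\<not> q < 0\<close> pq p0 mu by (intro sin_neg_interval) auto
    moreover have "0 < 1 - r" using assms(4) by simp
    ultimately have "r * sin (pi * q) \<ge> 0" "(1 - r) * sin (pi * p) < 0"
      using assms(3) by (auto intro: mult_nonneg_nonneg mult_pos_neg)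
    then show False using sn by linarith
  qed
  have sq: "sin (pi * q) \<noteq> 0" using sin_neg_interval[OF q0 q1] by simp
  define w where "w s = s powr p * (1 - s) powr q" for s :: real
  have dK: "deriv K s = w s" if s: "s \<in> {0<..<1}" for s
  proof -
    have "isCont w s" using s unfolding w_def[abs_def] by (auto intro!: continuous_intros)
    then have "continuous (at s within {0..1} - {}) w" by (rule continuous_at_imp_continuous_within)
    from integral_has_vector_derivative_continuous_at[OF assms(5)[folded w_def[abs_def]] _ _ this] s
    have "((\<lambda>u. integral {0..u} w) has_vector_derivative w s) (at s within {0..1})" by auto
    moreover have "at s within {0..1} = at s" using s by (intro at_within_interior) auto
    ultimately have "((\<lambda>u. integral {0..u} w) has_real_derivative w s) (at s)"
      by (simp add: has_real_derivative_iff_has_vector_derivative)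
    then show ?thesis using assms(6) by (simp add: DERIV_imp_deriv w_def[abs_def])
  qed
  define \<Gamma> where "\<Gamma> = Gamma (2 - \<alpha>)"
  have "0 < Gamma (2 - \<alpha>)" by (rule Gamma_real_pos) (use assms(2) in simp)
  then have G0: "\<Gamma> \<noteq> 0" by (simp add: \<Gamma>_def)
  define Ai where "Ai y = integral {0..y} (\<lambda>s. (y - s) powr (-\<mu>) * (s powr p * (1 - s) powr q))" for y
  define Bi where "Bi y = integral {y..1} (\<lambda>s. (s - y) powr (-\<mu>) * (s powr p * (1 - s) powr q))" for y
  have F1: "frac_int (2 - \<alpha>) (deriv K) y = (1 / \<Gamma>) * Ai y" if y: "y \<in> {0<..<1}" for y
  proof -
    have "integral {0..y} (\<lambda>s. (y - s) powr (2 - \<alpha> - 1) * deriv K s) = Ai y"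
      unfolding Ai_def
      by (rule integral_spike[of "{0, y}"]) (use y in \<open>auto simp: dK w_def \<mu>_def\<close>)
    then show ?thesis by (simp add: frac_int_def \<Gamma>_def)
  qed
  have F2: "frac_int_star (2 - \<alpha>) (deriv K) y = (1 / \<Gamma>) * Bi y" if y: "y \<in> {0<..<1}" for y
  proof -
    have "integral {y..1} (\<lambda>s. (s - y) powr (2 - \<alpha> - 1) * deriv K s) = Bi y"
      unfolding Bi_def
      by (rule integral_spike[of "{y, 1}"]) (use y in \<open>auto simp: dK w_def \<mu>_def\<close>)
    then show ?thesis by (simp add: frac_int_star_def \<Gamma>_def)
  qed
  have rel: "sin (pi * p) * Ai y + sin (pi * q) * Bi y = - pi" if y: "y \<in> {0<..<1}" for y
  proof -
    interpret c: cfg \<mu> p q y using mu p0 p1 q0 q1 pq y by unfold_locales auto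
    have "integral {0..y} c.D = Ai y" unfolding Ai_def
      by (rule integral_spike[of "{0, y}"]) (use y in \<open>auto simp: c.D_def abs_if\<close>)
    moreover have "integral {y..1} c.D = Bi y" unfolding Bi_def
      by (rule integral_spike[of "{y, 1}"]) (use y in \<open>auto simp: c.D_def abs_if\<close>)
    ultimately show ?thesis using c.key_identity by simp
  qed
  have "\<exists>A'. (Ai has_real_derivative A') (at x)"
    unfolding Ai_def using A_deriv[OF mu p0 p1 q0 q1, of x] x by auto
  then obtain A' where A': "(Ai has_real_derivative A') (at x)" by blast
  have d1: "(frac_int (2 - \<alpha>) (deriv K) has_real_derivative (1 / \<Gamma>) * A') (at x)"
  proof (rule has_field_derivative_transform_within_open[where S="{0<..<1}"])
    show "((\<lambda>y. (1 / \<Gamma>) * Ai y) has_real_derivative (1 / \<Gamma>) * A') (at x)"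
      by (rule DERIV_cmult[OF A'])
  qed (use x F1 in auto)
  have d2: "(frac_int_star (2 - \<alpha>) (deriv K) has_real_derivative (1 / \<Gamma>) * (- sin (pi * p) * A' / sin (pi * q))) (at x)"
  proof (rule has_field_derivative_transform_within_open[where S="{0<..<1}"])
    show "((\<lambda>y. (1 / \<Gamma>) * ((- pi - sin (pi * p) * Ai y) / sin (pi * q))) has_real_derivative
          (1 / \<Gamma>) * (- sin (pi * p) * A' / sin (pi * q))) (at x)"
      using A' G0 sq by (auto intro!: derivative_eq_intros)
    show "(1 / \<Gamma>) * ((- pi - sin (pi * p) * Ai y) / sin (pi * q)) = frac_int_star (2 - \<alpha>) (deriv K) y"
      if "y \<in> {0<..<1}" for y
    proof -
      have "(- pi - sin (pi * p) * Ai y) / sin (pi * q) = Bi y"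
        using rel[OF that] sq by (simp add: field_simps)
      then show ?thesis using F2[OF that] by simp
    qed
  qed (use x in auto)
  have "frac_int (2 - \<alpha>) (deriv K) differentiable (at x)"
    using d1 by (auto intro: differentiableI has_field_derivative_imp_has_derivative)
  moreover have "frac_int_star (2 - \<alpha>) (deriv K) differentiable (at x)"
    using d2 by (auto intro: differentiableI has_field_derivative_imp_has_derivative)
  moreover have "frac_L r \<alpha> K x = 0"
  proof -
    have "frac_D \<alpha> K x = (1 / \<Gamma>) * A'" unfolding frac_D_def by (rule DERIV_imp_deriv[OF d1])
    moreover have "frac_D_star \<alpha> K x = (1 / \<Gamma>) * (- sin (pi * p) * A' / sin (pi * q))"
      unfolding frac_D_star_def by (rule DERIV_imp_deriv[OF d2])
    moreover have "r * ((1 / \<Gamma>) * A') + (1 - r) * ((1 / \<Gamma>) * (- sin (pi * p) * A' / sin (pi * q))) = 0"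
    proof -
      have "r * ((1 / \<Gamma>) * A') + (1 - r) * ((1 / \<Gamma>) * (- sin (pi * p) * A' / sin (pi * q)))
          = (1 / \<Gamma>) * A' * (r * sin (pi * q) - (1 - r) * sin (pi * p)) / sin (pi * q)"
        using sq G0 by (simp add: field_simps)
      also have "\<dots> = 0" using sn by simp
      finally show ?thesis .
    qed
    ultimately show ?thesis by (simp add: frac_L_def)
  qed
  ultimately show "frac_int (2 - \<alpha>) (deriv K) differentiable (at x) \<and>
           frac_int_star (2 - \<alpha>) (deriv K) differentiable (at x) \<and>
           frac_L r \<alpha> K x = 0" by blast
qed

end
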